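(* Under the setting below, the following formulae hold: \[ \begin{pmatrix}U_2^T\widetilde{U}_1\\ V_2^T\widetilde{V}_1\end{pmatrix} = \sum_{k=0}^{\infty} \mathcal{F}^k \begin{pmatrix}C_1\\ C_2\end{pmatrix}, \qquad \begin{pmatrix}U_1^T\widetilde{U}_2\\ V_1^T\widetilde{V}_2\end{pmatrix} = \sum_{k=0}^{\infty} \mathcal{G}^k \begin{pmatrix}C_3\\ C_4\end{pmatrix}, \] provided that $\|\mathcal{F}\|<1$ and $\|\mathcal{G}\|<1$. Here $\mathcal{F}$ and $\mathcal{G}$ are the linear operators \[ \mathcal{F}\begin{pmatrix}X_1\\ X_2\end{pmatrix} = \begin{pmatrix}F_U^{21}\circ(\Sigma_2\alpha_{22}^T X_1)+F_U^{21}\circ(\alpha_{22}X_2\widetilde\Sigma_1^T)\\ F_V^{21}\circ(\alpha_{22}^T X_1\widetilde\Sigma_1)+F_V^{21}\circ(\Sigma_2^T\alpha_{22}X_2)\end{pmatrix},\qquad \mathcal{G}\begin{pmatrix}X_3\\ X_4\end{pmatrix} = \begin{pmatrix}F_U^{12}\circ(\alpha_{11}X_4\widetilde\Sigma_2^T)+F_U^{12}\circ(\Sigma_1\alpha_{11}^T X_3)\\ F_V^{12}\circ(\Sigma_1^T\alpha_{11}X_4)+F_V^{12}\circ(\alpha_{11}^T X_3\widetilde\Sigma_2)\end{pmatrix}, \] and \begin{align*} C_1&=F_U^{21}\circ(\Sigma_2\alpha_{12}^TU_1^T\widetilde U_1+\alpha_{21}V_1^T\widetilde V_1\widetilde\Sigma_1^T),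 \quad C_2= F_V^{21}\circ(\alpha_{12}^TU_1^T\widetilde U_1\widetilde\Sigma_1+\Sigma_2^T\alpha_{21}V_1^T\widetilde V_1), \\ C_3&=F_U^{12}\circ(\alpha_{12}V_2^T\widetilde V_2\widetilde\Sigma_2^T+\Sigma_1\alpha_{21}^TU_2^T\widetilde U_2) ,\quad C_4= F_V^{12}\circ(\Sigma_1^T\alpha_{12}V_2^T\widetilde V_2+\alpha_{21}^T U_2^T\widetilde U_2\widetilde \Sigma_2), \end{align*} where \[ \alpha=\begin{pmatrix} \alpha_{11} & \alpha_{12} \\ \alpha_{21} & \alpha_{22} \end{pmatrix} \equiv \begin{pmatrix} U_1^T \Delta A V_1 & U_1^T \Delta A V_2 \\ U_2^T \Delta A V_1 & U_2^T \Delta A V_2 \end{pmatrix} =U^T \Delta A V. \]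
   Context: Let $A$ and $\widetilde A=A+\Delta A$ be two $n\times m$ real matrices, $A$ of rank at least $r$, with conformal full SVDs $A=U\Sigma V^T=\begin{pmatrix}U_1 & U_2\end{pmatrix}\begin{pmatrix}\Sigma_1 & \\ & \Sigma_2\end{pmatrix}\begin{pmatrix}V_1^T\\ V_2^T\end{pmatrix}$ and $\widetilde A=\widetilde U\widetilde\Sigma\widetilde V^T=\begin{pmatrix}\widetilde U_1 & \widetilde U_2\end{pmatrix}\begin{pmatrix}\widetilde\Sigma_1 & \\ & \widetilde\Sigma_2\end{pmatrix}\begin{pmatrix}\widetilde V_1^T\\ \widetilde V_2^T\end{pmatrix}$, where $U_1\in\mathbb{R}^{n,r}$, $U_2\in\mathbb{R}^{n,n-r}$, $V_1\in\mathbb{R}^{m,r}$, $V_2\in\mathbb{R}^{m,m-r}$, $\Sigma_1=\mathrm{diag}\{\sigma_1,\dots,\sigma_r\}$, $\Sigma_2$ contains $\sigma_{r+1},\dots,\sigma_{\min\{n,m\}}$ (singular values of $A$ in descending order), and similarly for $\widetilde A$ with singular values $\widetilde\sigma_i$. Assume $\sigma_r-\widetilde\sigma_{r+1}>0$ and $\widetilde\sigma_r-\sigma_{r+1}>0$. Set $\sigma_i=\widetilde\sigma_i=0$ for $i>\min\{n,m\}$. $\circ$ denotes the Hadamard (entrywise) product. $F_U^{12}\in\mathbb{R}^{r,n-r}$ has entries $(F_U^{12})_{i,j-r}=\frac{1}{\widetilde\sigma_j^2-\sigma_i^2}$, $1\le i\le r$, $r+1\le j\le n$; $F_U^{21}\in\mathbb{R}^{n-r,r}$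 has entries $(F_U^{21})_{i-r,j}=\frac{1}{\widetilde\sigma_j^2-\sigma_i^2}$, $r+1\le i\le n$, $1\le j\le r$; $F_V^{12}\in\mathbb{R}^{r,m-r}$ has entries $(F_V^{12})_{i,j-r}=\frac{1}{\widetilde\sigma_j^2-\sigma_i^2}$, $1\le i\le r$, $r+1\le j\le m$; $F_V^{21}\in\mathbb{R}^{m-r,r}$ has entries $(F_V^{21})_{i-r,j}=\frac{1}{\widetilde\sigma_j^2-\sigma_i^2}$, $r+1\le i\le m$, $1\le j\le r$. *)

theory Defs
  imports "HOL-Analysis.Analysis" "Jordan_Normal_Form.DL_Rank"
begin

definition hadamard :: "real mat \<Rightarrow> real mat \<Rightarrow> real mat" (infixl \<open>\<circ>\<^sub>h\<close> 71) where
  "hadamard A B = mat (dim_row A) (dim_col A) (\<lambda>(i,j). A $$ (i,j) * B $$ (i,j))"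

definition is_full_svd :: "nat \<Rightarrow> nat \<Rightarrow> real mat \<Rightarrow> real mat \<Rightarrow> real mat \<Rightarrow> real mat \<Rightarrow> bool" where
  "is_full_svd n m A U S V \<longleftrightarrow>
     A \<in> carrier_mat n m \<and> U \<in> carrier_mat n n \<and> S \<in> carrier_mat n m \<and> V \<in> carrier_mat m m \<and>
     transpose_mat U * U = 1\<^sub>m n \<and> U * transpose_mat U = 1\<^sub>m n \<and>
     transpose_mat V * V = 1\<^sub>m m \<and> V * transpose_mat V = 1\<^sub>m m \<and>
     (\<forall>i<n. \<forall>j<m. i \<noteq> j \<longrightarrow> S $$ (i,j) = 0) \<and>
     (\<forall>i<min n m. 0 \<le> S $$ (i,i)) \<and>
     (\<forall>i j. i \<le> j \<longrightarrow> j < min n m \<longrightarrow> S $$ (j,j) \<le> S $$ (i,i)) \<and>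
     A = U * S * transpose_mat V"

text \<open>The k-th singular value (0-based: sval S k is sigma_(k+1)), set to 0 beyond min(n,m).\<close>
definition sval :: "real mat \<Rightarrow> nat \<Rightarrow> real" where
  "sval S k = (if k < min (dim_row S) (dim_col S) then S $$ (k,k) else 0)"

definition cols_first :: "real mat \<Rightarrow> nat \<Rightarrow> real mat" where
  "cols_first M r = mat (dim_row M) r (\<lambda>(i,j). M $$ (i,j))"
definition cols_last :: "real mat \<Rightarrow> nat \<Rightarrow> real mat" where
  "cols_last M r = mat (dim_row M) (dim_col M - r) (\<lambda>(i,j). M $$ (i,j+r))"
definition block_tl :: "real mat \<Rightarrow> nat \<Rightarrow> real mat" where
  "block_tl M r = mat r r (\<lambda>(i,j). M $$ (i,j))"
definition block_br :: "real mat \<Rightarrow> nat \<Rightarrow> real mat" where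
  "block_br M r = mat (dim_row M - r) (dim_col M - r) (\<lambda>(i,j). M $$ (i+r,j+r))"

text \<open>The matrices F_U^12 (r x (n-r)), F_U^21 ((n-r) x r); for F_V use p = m.\<close>
definition F12 :: "nat \<Rightarrow> nat \<Rightarrow> real mat \<Rightarrow> real mat \<Rightarrow> real mat" where
  "F12 p r S St = mat r (p - r) (\<lambda>(i,j). 1 / ((sval St (r+j))\<^sup>2 - (sval S i)\<^sup>2))"
definition F21 :: "nat \<Rightarrow> nat \<Rightarrow> real mat \<Rightarrow> real mat \<Rightarrow> real mat" where
  "F21 p r S St = mat (p - r) r (\<lambda>(i,j). 1 / ((sval St j)\<^sup>2 - (sval S (r+i))\<^sup>2))"

definition frob :: "real mat \<Rightarrow> real" where
  "frob M = sqrt (\<Sum>i<dim_row M. \<Sum>j<dim_col M. (M $$ (i,j))\<^sup>2)"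
definition pair_norm :: "real mat \<times> real mat \<Rightarrow> real" where
  "pair_norm X = sqrt ((frob (fst X))\<^sup>2 + (frob (snd X))\<^sup>2)"
definition op_norm :: "(real mat \<times> real mat) set \<Rightarrow> (real mat \<times> real mat \<Rightarrow> real mat \<times> real mat) \<Rightarrow> real" where
  "op_norm D T = Sup {pair_norm (T X) | X. X \<in> D \<and> pair_norm X \<le> 1}"

definition mat_sums :: "(nat \<Rightarrow> real mat) \<Rightarrow> real mat \<Rightarrow> bool" where
  "mat_sums f X \<longleftrightarrow> (\<forall>i<dim_row X. \<forall>j<dim_col X. (\<lambda>k. f k $$ (i,j)) sums (X $$ (i,j)))"

end

theory Submission
  imports Defs
begin

definition rows_first :: "real mat \<Rightarrow> nat \<Rightarrow> real mat" where
  "rows_first M r = mat r (dim_col M) (\<lambda>(i,j). M $$ (i,j))"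
definition rows_last :: "real mat \<Rightarrow> nat \<Rightarrow> real mat" where
  "rows_last M r = mat (dim_row M - r) (dim_col M) (\<lambda>(i,j). M $$ (i+r,j))"

lemma mult_entry':
  assumes "i < dim_row A" "j < dim_col B" "dim_col A = dim_row B"
  shows "(A * B) $$ (i,j) = (\<Sum>k<dim_row B. A $$ (i,k) * B $$ (k,j))"
  using assms by (auto simp: scalar_prod_def atLeast0LessThan intro!: sum.cong)

lemma sum_split_nat:
  fixes f :: "nat \<Rightarrow> real"
  assumes "r \<le> c"
  shows "(\<Sum>k<c. f k) = (\<Sum>k<r. f k) + (\<Sum>k<c-r. f (k+r))"
proof -
  have "(\<Sum>k<c. f k) = (\<Sum>k\<in>{0..<r}. f k) + (\<Sum>k\<in>{r..<c}. f k)"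
    using assms by (simp add: atLeast0LessThan[symmetric] sum.atLeastLessThan_concat)
  also have "(\<Sum>k\<in>{r..<c}. f k) = (\<Sum>k\<in>{0..<c-r}. f (k+r))"
    using sum.shift_bounds_nat_ivl[of f 0 r "c-r"] assms by simp
  finally show ?thesis by (simp add: atLeast0LessThan)
qed

lemma split_mult:
  assumes "M \<in> carrier_mat a c" "N \<in> carrier_mat c b" "r \<le> c"
  shows "M * N = cols_first M r * rows_first N r + cols_last M r * rows_last N r"
proof (rule eq_matI)
  fix i j assume ij: "i < dim_row (cols_first M r * rows_first N r + cols_last M r * rows_last N r)"
    "j < dim_col (cols_first M r * rows_first N r + cols_last M r * rows_last N r)"
  then have i: "i < a" and j: "j < b" using assms by (auto simp: cols_last_def rows_last_def)
  have "(M*N) $$ (i,j) = (\<Sum>k<c. M $$ (i,k) * N $$ (k,j))"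
    using assms i j by (subst mult_entry') auto
  also have "\<dots> = (\<Sum>k<r. M $$ (i,k) * N $$ (k,j)) + (\<Sum>k<c-r. M $$ (i,k+r) * N $$ (k+r,j))"
    by (rule sum_split_nat[OF assms(3)])
  also have "\<dots> = (cols_first M r * rows_first N r + cols_last M r * rows_last N r) $$ (i,j)"
    using assms i j
    by (auto simp: mult_entry' cols_first_def rows_first_def cols_last_def rows_last_def scalar_prod_def atLeast0LessThan intro!: sum.cong)
  finally show "(M * N) $$ (i, j) = (cols_first M r * rows_first N r + cols_last M r * rows_last N r) $$ (i, j)" .
qed (use assms in \<open>auto simp: cols_last_def rows_last_def\<close>)

lemma dims_blocks[simp]:
  "dim_row (cols_first M r) = dim_row M" "dim_col (cols_first M r) = r"
  "dim_row (cols_last M r) = dim_row M" "dim_col (cols_last M r) = dim_col M - r"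
  "dim_row (rows_first M r) = r" "dim_col (rows_first M r) = dim_col M"
  "dim_row (rows_last M r) = dim_row M - r" "dim_col (rows_last M r) = dim_col M"
  "dim_row (block_tl M r) = r" "dim_col (block_tl M r) = r"
  "dim_row (block_br M r) = dim_row M - r" "dim_col (block_br M r) = dim_col M - r"
  by (auto simp: cols_first_def cols_last_def rows_first_def rows_last_def block_tl_def block_br_def)

lemma carrier_blocks[simp]:
  "cols_first M r \<in> carrier_mat (dim_row M) r"
  "cols_last M r \<in> carrier_mat (dim_row M) (dim_col M - r)"
  "block_tl M r \<in> carrier_mat r r"
  "block_br M r \<in> carrier_mat (dim_row M - r) (dim_col M - r)"
  by (rule carrier_matI; simp)+

lemma cols_first_mult:
  assumes "r \<le> dim_col N" "dim_col M = dim_row N"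
  shows "cols_first (M*N) r = M * cols_first N r"
  using assms by (intro eq_matI) (auto simp: cols_first_def scalar_prod_def col_def)

lemma cols_last_mult:
  assumes "dim_col M = dim_row N"
  shows "cols_last (M*N) r = M * cols_last N r"
  using assms by (intro eq_matI) (auto simp: cols_last_def scalar_prod_def col_def)

lemma transpose_cols_first:
  assumes "r \<le> dim_col M"
  shows "transpose_mat (cols_first M r) = rows_first (transpose_mat M) r"
  using assms by (intro eq_matI) (auto simp: cols_first_def rows_first_def)

lemma transpose_cols_last:
  shows "transpose_mat (cols_last M r) = rows_last (transpose_mat M) r"
  by (intro eq_matI) (auto simp: cols_last_def rows_last_def)

lemma zero_mult_first:
  assumes "M \<in> carrier_mat a c" "N \<in> carrier_mat c b" "r \<le> c"
    and z: "\<And>i k j. i < a \<Longrightarrow> k < c \<Longrightarrow> j < b \<Longrightarrow> r \<le> k \<Longrightarrow> M $$ (i,k) * N $$ (k,j) = 0"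
  shows "M * N = cols_first M r * rows_first N r"
proof -
  have "cols_last M r * rows_last N r = 0\<^sub>m a b"
  proof (rule eq_matI)
    fix i j assume "i < dim_row (0\<^sub>m a b :: real mat)" "j < dim_col (0\<^sub>m a b :: real mat)"
    then show "(cols_last M r * rows_last N r) $$ (i, j) = 0\<^sub>m a b $$ (i, j)"
      using assms z by (auto simp: cols_last_def rows_last_def scalar_prod_def intro!: sum.neutral)
  qed (use assms in auto)
  moreover have "cols_first M r * rows_first N r \<in> carrier_mat a b" using assms
    by (intro carrier_matI) simp_all
  ultimately show ?thesis using split_mult[OF assms(1-3)] by simp
qed

lemma zero_mult_last:
  assumes "M \<in> carrier_mat a c" "N \<in> carrier_mat c b" "r \<le> c"
    and z: "\<And>i k j. i < a \<Longrightarrow> k < c \<Longrightarrow> j < b \<Longrightarrow> k < r \<Longrightarrow> M $$ (i,k) * N $$ (k,j) = 0"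
  shows "M * N = cols_last M r * rows_last N r"
proof -
  have "cols_first M r * rows_first N r = 0\<^sub>m a b"
  proof (rule eq_matI)
    fix i j assume "i < dim_row (0\<^sub>m a b :: real mat)" "j < dim_col (0\<^sub>m a b :: real mat)"
    then show "(cols_first M r * rows_first N r) $$ (i, j) = 0\<^sub>m a b $$ (i, j)"
      using assms z by (auto simp: cols_first_def rows_first_def scalar_prod_def intro!: sum.neutral)
  qed (use assms in auto)
  moreover have "cols_last M r * rows_last N r \<in> carrier_mat a b" using assms
    by (intro carrier_matI) (auto simp: cols_last_def rows_last_def)
  ultimately show ?thesis using split_mult[OF assms(1-3)] assms
    by simp
qed


lemma svd_block:
  assumes B: "B = P * D * transpose_mat Q" and P: "P \<in> carrier_mat a a" and D: "D \<in> carrier_mat a b"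
    and Q: "Q \<in> carrier_mat b b"
    and QQ: "transpose_mat Q * Q = 1\<^sub>m b" and off: "\<forall>i<a. \<forall>j<b. i \<noteq> j \<longrightarrow> D $$ (i,j) = 0"
    and r: "r \<le> a" "r \<le> b"
  shows "B * cols_first Q r = cols_first P r * block_tl D r"
    and "B * cols_last Q r = cols_last P r * block_br D r"
proof -
  have PD: "P * D \<in> carrier_mat a b" using P D by simp
  have BQ: "B * Q = P * D"
  proof -
    have "B * Q = (P * D) * (transpose_mat Q * Q)"
      unfolding B using PD Q by (subst assoc_mult_mat[of _ a b _ b _ b]) auto
    also have "\<dots> = P * D" using QQ right_mult_one_mat[OF PD] by simp
    finally show ?thesis .
  qed
  have Bc: "B \<in> carrier_mat a b" unfolding B using PD Q by simp
  have "B * cols_first Q r = cols_first (B*Q) r"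
    using Bc Q r by (subst cols_first_mult) auto
  also have "\<dots> = P * cols_first D r" using BQ P D r by (simp add: cols_first_mult)
  also have "\<dots> = cols_first P r * rows_first (cols_first D r) r"
    by (rule zero_mult_first[of _ a a _ r]) (use P D r off in \<open>auto simp: cols_first_def\<close>)
  also have "rows_first (cols_first D r) r = block_tl D r"
    using D r by (intro eq_matI) (auto simp: rows_first_def cols_first_def block_tl_def)
  finally show "B * cols_first Q r = cols_first P r * block_tl D r" .
  have "B * cols_last Q r = cols_last (B*Q) r"
    using Bc Q r by (subst cols_last_mult) auto
  also have "\<dots> = P * cols_last D r" using BQ P D r by (simp add: cols_last_mult)
  also have "\<dots> = cols_last P r * rows_last (cols_last D r) r"
    by (rule zero_mult_last[of _ a a _ "b - r"]) (use P D r off in \<open>auto simp: cols_last_def\<close>)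
  also have "rows_last (cols_last D r) r = block_br D r"
    using D r by (intro eq_matI) (auto simp: rows_last_def cols_last_def block_br_def)
  finally show "B * cols_last Q r = cols_last P r * block_br D r" .
qed

lemma orth_split:
  assumes "U \<in> carrier_mat n n" "U * transpose_mat U = 1\<^sub>m n" "r \<le> n"
  shows "cols_first U r * transpose_mat (cols_first U r) + cols_last U r * transpose_mat (cols_last U r) = 1\<^sub>m n"
  using split_mult[of U n n "transpose_mat U" n r] assms
  by (simp add: transpose_cols_first transpose_cols_last)

lemma block_tl_transpose:
  assumes "r \<le> dim_row S" "r \<le> dim_col S"
  shows "block_tl (transpose_mat S) r = transpose_mat (block_tl S r)"
  using assms by (intro eq_matI) (auto simp: block_tl_def)

lemma block_br_transpose:
  shows "block_br (transpose_mat S) r = transpose_mat (block_br S r)"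
  by (intro eq_matI) (auto simp: block_br_def)

lemma mult_assoc_dim:
  fixes A B C :: "real mat"
  shows "dim_col A = dim_row B \<Longrightarrow> dim_col B = dim_row C \<Longrightarrow> A * B * C = A * (B * C)"
  by (rule assoc_mult_mat[of A "dim_row A" "dim_col A" B "dim_col B" C "dim_col C"]) auto

lemma distribL_dim:
  fixes A B C :: "real mat"
  shows "dim_col A = dim_row B \<Longrightarrow> dim_row B = dim_row C \<Longrightarrow> dim_col B = dim_col C \<Longrightarrow> A * (B + C) = A * B + A * C"
  by (rule mult_add_distrib_mat[of A "dim_row A" "dim_col A" B "dim_col B" C]) auto

lemma distribR_dim:
  fixes A B C :: "real mat"
  shows "dim_row A = dim_row B \<Longrightarrow> dim_col A = dim_col B \<Longrightarrow> dim_col A = dim_row C \<Longrightarrow> (A + B) * C = A * C + B * C"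
  by (rule add_mult_distrib_mat[of A "dim_row A" "dim_col A" B C "dim_col C"]) auto

lemma transpose_mult_dim:
  fixes A B :: "real mat"
  shows "dim_col A = dim_row B \<Longrightarrow> transpose_mat (A * B) = transpose_mat B * transpose_mat A"
  by (rule transpose_mult[of A "dim_row A" "dim_col A" B "dim_col B"]) auto

lemma transpose_add_dim:
  fixes A B :: "real mat"
  shows "dim_row A = dim_row B \<Longrightarrow> dim_col A = dim_col B \<Longrightarrow> transpose_mat (A + B) = transpose_mat A + transpose_mat B"
  by (rule transpose_add[of A "dim_row A" "dim_col A" B]) auto

lemmas NF = mult_assoc_dim distribL_dim distribR_dim transpose_mult_dim transpose_add_dim transpose_transpose

lemma alg_E1:
  fixes A dA At Pu Pu' Pv Pv' Qu Qv Sg T :: "real mat"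
  assumes cA: "A \<in> carrier_mat n m" and cdA: "dA \<in> carrier_mat n m"
   and cPu: "Pu \<in> carrier_mat n p" and cPu': "Pu' \<in> carrier_mat n p'"
   and cPv: "Pv \<in> carrier_mat m q" and cPv': "Pv' \<in> carrier_mat m q'"
   and cQu: "Qu \<in> carrier_mat n s" and cQv: "Qv \<in> carrier_mat m t"
   and cSg: "Sg \<in> carrier_mat p q" and cT: "T \<in> carrier_mat s t"
   and At: "At = A + dA"
   and h1: "A * Pv = Pu * Sg" and h2: "transpose_mat A * Pu = Pv * transpose_mat Sg"
   and h3: "At * Qv = Qu * T" and h4: "transpose_mat At * Qu = Qv * transpose_mat T"
   and h5: "Pu * transpose_mat Pu + Pu' * transpose_mat Pu' = 1\<^sub>m n"
   and h6: "Pv * transpose_mat Pv + Pv' * transpose_mat Pv' = 1\<^sub>m m"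
  shows "transpose_mat Pu * (Qu * (T * transpose_mat T)) =
     Sg * (transpose_mat Sg * (transpose_mat Pu * Qu))
     + (Sg * (transpose_mat Pv * (transpose_mat dA * (Pu * (transpose_mat Pu * Qu))))
        + Sg * (transpose_mat Pv * (transpose_mat dA * (Pu' * (transpose_mat Pu' * Qu)))))
     + (transpose_mat Pu * (dA * (Pv * (transpose_mat Pv * (Qv * transpose_mat T))))
        + transpose_mat Pu * (dA * (Pv' * (transpose_mat Pv' * (Qv * transpose_mat T)))))"
proof -
  note dims[simp] = carrier_matD[OF cA] carrier_matD[OF cdA] carrier_matD[OF cPu] carrier_matD[OF cPu']
    carrier_matD[OF cPv] carrier_matD[OF cPv'] carrier_matD[OF cQu] carrier_matD[OF cQv]
    carrier_matD[OF cSg] carrier_matD[OF cT]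
  have k3: "Qu * (T * Z) = A * (Qv * Z) + dA * (Qv * Z)" if "dim_row Z = t" for Z
  proof -
    have "Qu * (T * Z) = (Qu * T) * Z" using that by (simp add: NF)
    also have "\<dots> = (A + dA) * Qv * Z" using h3 At by simp
    finally show ?thesis using that by (simp add: NF)
  qed
  have k4: "Qv * transpose_mat T = transpose_mat A * Qu + transpose_mat dA * Qu"
    using h4 At by (simp add: NF)
  have kA: "transpose_mat Pu * (A * Z) = Sg * (transpose_mat Pv * Z)" if "dim_row Z = m" for Z
  proof -
    have "transpose_mat Pu * A = transpose_mat (transpose_mat A * Pu)" by (simp add: NF)
    also have "\<dots> = Sg * transpose_mat Pv" using h2 by (simp add: NF)
    finally have e: "transpose_mat Pu * A = Sg * transpose_mat Pv" .
    have "transpose_mat Pu * (A * Z) = (transpose_mat Pu * A) * Z" using that by (simp add: NF)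
    also have "\<dots> = Sg * (transpose_mat Pv * Z)" using e that by (simp add: NF)
    finally show ?thesis .
  qed
  have kA': "transpose_mat Pv * (transpose_mat A * Z) = transpose_mat Sg * (transpose_mat Pu * Z)" if "dim_row Z = n" for Z
  proof -
    have "transpose_mat Pv * transpose_mat A = transpose_mat (A * Pv)" by (simp add: NF)
    also have "\<dots> = transpose_mat Sg * transpose_mat Pu" using h1 by (simp add: NF)
    finally have e: "transpose_mat Pv * transpose_mat A = transpose_mat Sg * transpose_mat Pu" .
    have "transpose_mat Pv * (transpose_mat A * Z) = (transpose_mat Pv * transpose_mat A) * Z" using that by (simp add: NF)
    also have "\<dots> = transpose_mat Sg * (transpose_mat Pu * Z)" using e that by (simp add: NF)
    finally show ?thesis .
  qed
  have i5: "Z = Pu * (transpose_mat Pu * Z) + Pu' * (transpose_mat Pu' * Z)" if "dim_row Z = n" for Z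
  proof -
    have "Z = 1\<^sub>m n * Z" using that by simp
    also have "\<dots> = (Pu * transpose_mat Pu + Pu' * transpose_mat Pu') * Z" using h5 by simp
    finally show ?thesis using that by (simp add: NF)
  qed
  have i6: "Z = Pv * (transpose_mat Pv * Z) + Pv' * (transpose_mat Pv' * Z)" if "dim_row Z = m" for Z
  proof -
    have "Z = 1\<^sub>m m * Z" using that by simp
    also have "\<dots> = (Pv * transpose_mat Pv + Pv' * transpose_mat Pv') * Z" using h6 by simp
    finally show ?thesis using that by (simp add: NF)
  qed
  have "transpose_mat Pu * (Qu * (T * transpose_mat T))
      = transpose_mat Pu * (A * (Qv * transpose_mat T)) + transpose_mat Pu * (dA * (Qv * transpose_mat T))"
    by (subst k3) (simp_all add: NF)
  also have "transpose_mat Pu * (A * (Qv * transpose_mat T)) = Sg * (transpose_mat Pv * (Qv * transpose_mat T))"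
    by (rule kA) simp
  also have "transpose_mat Pv * (Qv * transpose_mat T) = 
      transpose_mat Sg * (transpose_mat Pu * Qu) + transpose_mat Pv * (transpose_mat dA * Qu)"
    unfolding k4 by (simp add: NF kA')
  also have "transpose_mat dA * Qu = transpose_mat dA * (Pu * (transpose_mat Pu * Qu) + Pu' * (transpose_mat Pu' * Qu))"
    by (subst i5[of Qu, symmetric]) simp_all
  also have "dA * (Qv * transpose_mat T) = dA * (Pv * (transpose_mat Pv * (Qv * transpose_mat T)) + Pv' * (transpose_mat Pv' * (Qv * transpose_mat T)))"
    by (subst i6[of "Qv * transpose_mat T", symmetric]) simp_all
  finally show ?thesis by (simp add: NF)
qed


lemma frob_nonneg: "0 \<le> frob M"
  unfolding frob_def by (auto intro!: sum_nonneg)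

lemma pair_norm_nonneg: "0 \<le> pair_norm Z"
  unfolding pair_norm_def by simp

lemma entry_le_frob:
  assumes "i < dim_row M" "j < dim_col M"
  shows "\<bar>M $$ (i,j)\<bar> \<le> frob M"
proof -
  have "(M $$ (i,j))\<^sup>2 \<le> (\<Sum>j<dim_col M. (M $$ (i,j))\<^sup>2)"
    using assms by (intro member_le_sum) auto
  also have "\<dots> \<le> (\<Sum>i<dim_row M. \<Sum>j<dim_col M. (M $$ (i,j))\<^sup>2)"
    using assms by (intro member_le_sum[of i "{..<dim_row M}" "\<lambda>i. \<Sum>j<dim_col M. (M $$ (i,j))\<^sup>2"]) (auto intro: sum_nonneg)
  finally show ?thesis unfolding frob_def using real_sqrt_le_mono real_sqrt_abs by metis
qed

lemma frob_le_pair: "frob (fst Z) \<le> pair_norm Z" "frob (snd Z) \<le> pair_norm Z"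
  unfolding pair_norm_def by (auto intro!: real_le_rsqrt simp: frob_nonneg)

lemma frob_smult: "frob (k \<cdot>\<^sub>m M) = \<bar>k\<bar> * frob M"
proof -
  have "(\<Sum>i<dim_row M. \<Sum>j<dim_col M. ((k \<cdot>\<^sub>m M) $$ (i,j))\<^sup>2) = k\<^sup>2 * (\<Sum>i<dim_row M. \<Sum>j<dim_col M. (M $$ (i,j))\<^sup>2)"
    by (simp add: sum_distrib_left power_mult_distrib)
  then show ?thesis unfolding frob_def by (simp add: real_sqrt_mult)
qed

lemma pair_norm_smult: "pair_norm (k \<cdot>\<^sub>m fst Z, k \<cdot>\<^sub>m snd Z) = \<bar>k\<bar> * pair_norm Z"
proof -
  have "(\<bar>k\<bar> * frob (fst Z))\<^sup>2 + (\<bar>k\<bar> * frob (snd Z))\<^sup>2 = k\<^sup>2 * ((frob (fst Z))\<^sup>2 + (frob (snd Z))\<^sup>2)"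
    by (simp add: power_mult_distrib algebra_simps)
  then show ?thesis unfolding pair_norm_def by (simp add: frob_smult real_sqrt_mult)
qed

lemma frob_zero_entries:
  assumes "frob M = 0" "i < dim_row M" "j < dim_col M"
  shows "M $$ (i,j) = 0"
  using entry_le_frob[OF assms(2,3)] assms(1) by simp

lemma series:
  fixes Tm :: "real mat \<times> real mat \<Rightarrow> real mat \<times> real mat" and X C :: "real mat \<times> real mat"
  assumes Ddef: "D = carrier_mat a b \<times> carrier_mat c d"
  assumes maps: "\<And>Z. Z \<in> D \<Longrightarrow> Tm Z \<in> D"
    and add: "\<And>Y Z. Y \<in> D \<Longrightarrow> Z \<in> D \<Longrightarrow> Tm (fst Y + fst Z, snd Y + snd Z) = (fst (Tm Y) + fst (Tm Z), snd (Tm Y) + snd (Tm Z))"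
    and hom: "\<And>Z k. Z \<in> D \<Longrightarrow> Tm (k \<cdot>\<^sub>m fst Z, k \<cdot>\<^sub>m snd Z) = (k \<cdot>\<^sub>m fst (Tm Z), k \<cdot>\<^sub>m snd (Tm Z))"
    and bdd: "\<exists>K. \<forall>Z\<in>D. pair_norm Z \<le> 1 \<longrightarrow> pair_norm (Tm Z) \<le> K"
    and nrm: "op_norm D Tm < 1"
    and X: "X \<in> D" and C: "C \<in> D" and fixp: "X = (fst (Tm X) + fst C, snd (Tm X) + snd C)"
  shows "mat_sums (\<lambda>k. fst ((Tm^^k) C)) (fst X) \<and> mat_sums (\<lambda>k. snd ((Tm^^k) C)) (snd X)"
proof -
  define q where "q = op_norm D Tm"
  define SS where "SS = {pair_norm (Tm Z) | Z. Z \<in> D \<and> pair_norm Z \<le> 1}"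
  have q_def': "q = Sup SS" unfolding q_def SS_def op_norm_def by simp
  have bddS: "bdd_above SS" using bdd unfolding SS_def bdd_above_def by blast
  have inS: "pair_norm (Tm Z) \<le> q" if "Z \<in> D" "pair_norm Z \<le> 1" for Z
  proof -
    have "pair_norm (Tm Z) \<in> SS" unfolding SS_def using that by blast
    then show ?thesis unfolding q_def' using bddS by (rule cSup_upper)
  qed
  have smD: "(k \<cdot>\<^sub>m fst Z, k \<cdot>\<^sub>m snd Z) \<in> D" if "Z \<in> D" for Z k
    using that unfolding Ddef by (cases Z) auto
  have contr: "pair_norm (Tm Z) \<le> q * pair_norm Z" if Z: "Z \<in> D" for Z
  proof (cases "pair_norm Z = 0")
    case True
    then have f0: "frob (fst Z) = 0" "frob (snd Z) = 0"
      using frob_le_pair[of Z] frob_nonneg[of "fst Z"] frob_nonneg[of "snd Z"] by linarith+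
    have "fst Z = 0 \<cdot>\<^sub>m fst Z" by (rule eq_matI) (auto simp: frob_zero_entries[OF f0(1)])
    moreover have "snd Z = 0 \<cdot>\<^sub>m snd Z" by (rule eq_matI) (auto simp: frob_zero_entries[OF f0(2)])
    ultimately have "Z = (0 \<cdot>\<^sub>m fst Z, 0 \<cdot>\<^sub>m snd Z)" by (cases Z) auto
    then have "Tm Z = (0 \<cdot>\<^sub>m fst (Tm Z), 0 \<cdot>\<^sub>m snd (Tm Z))" using hom[OF Z, of 0] by metis
    then have "pair_norm (Tm Z) = 0" using pair_norm_smult[of 0 "Tm Z"] by simp
    then show ?thesis using True by simp
  next
    case False
    define p where "p = pair_norm Z"
    have p: "p > 0" using False pair_norm_nonneg[of Z] unfolding p_def by linarith
    have "pair_norm (Tm (inverse p \<cdot>\<^sub>m fst Z, inverse p \<cdot>\<^sub>m snd Z)) \<le> q"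
      using inS[OF smD[OF Z]] pair_norm_smult[of "inverse p" Z] p unfolding p_def by simp
    then have "inverse p * pair_norm (Tm Z) \<le> q"
      using hom[OF Z, of "inverse p"] pair_norm_smult[of "inverse p" "Tm Z"] p by simp
    then show ?thesis using p unfolding p_def[symmetric] by (simp add: field_simps)
  qed
  have Z0: "(0\<^sub>m a b, 0\<^sub>m c d) \<in> D" unfolding Ddef by auto
  have "pair_norm (0\<^sub>m a b :: real mat, 0\<^sub>m c d :: real mat) = 0"
    unfolding pair_norm_def frob_def by simp
  then have q0: "0 \<le> q" using inS[OF Z0] pair_norm_nonneg[of "Tm (0\<^sub>m a b, 0\<^sub>m c d)"] by simp
  have q1: "q < 1" using nrm q_def by simp
  have itD: "(Tm^^k) Z \<in> D" if "Z \<in> D" for k Z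
    using that by (induction k) (auto simp: maps)
  have itadd: "(Tm^^k) (fst Y + fst Z, snd Y + snd Z) = (fst ((Tm^^k) Y) + fst ((Tm^^k) Z), snd ((Tm^^k) Y) + snd ((Tm^^k) Z))"
    if "Y \<in> D" "Z \<in> D" for k Y Z
    using that
  proof (induction k)
    case 0 then show ?case by simp
  next
    case (Suc k)
    then show ?case using add[OF itD[OF Suc.prems(1)] itD[OF Suc.prems(2)], of k k] by simp
  qed
  have itnorm: "pair_norm ((Tm^^k) X) \<le> q^k * pair_norm X" for k
  proof (induction k)
    case 0 then show ?case by simp
  next
    case (Suc k)
    have "pair_norm ((Tm^^Suc k) X) \<le> q * pair_norm ((Tm^^k) X)" using contr[OF itD[OF X]] by simp
    also have "\<dots> \<le> q * (q^k * pair_norm X)" using Suc q0 by (intro mult_left_mono) auto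
    finally show ?case by (simp add: algebra_simps)
  qed
  have TX: "Tm X \<in> D" using maps X by simp
  have CD: "fst ((Tm^^k) C) \<in> carrier_mat a b" "snd ((Tm^^k) C) \<in> carrier_mat c d" for k
    using itD[OF C, of k] unfolding Ddef by (auto simp: mem_Times_iff)
  have XD: "fst ((Tm^^k) X) \<in> carrier_mat a b" "snd ((Tm^^k) X) \<in> carrier_mat c d" for k
    using itD[OF X, of k] unfolding Ddef by (auto simp: mem_Times_iff)
  have ident: "(\<forall>i<a. \<forall>j<b. fst X $$ (i,j) = fst ((Tm^^N) X) $$ (i,j) + (\<Sum>k<N. fst ((Tm^^k) C) $$ (i,j)))
     \<and> (\<forall>i<c. \<forall>j<d. snd X $$ (i,j) = snd ((Tm^^N) X) $$ (i,j) + (\<Sum>k<N. snd ((Tm^^k) C) $$ (i,j)))" for N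
  proof (induction N)
    case 0 then show ?case by simp
  next
    case (Suc N)
    have "(Tm^^N) X = (Tm^^N) (fst (Tm X) + fst C, snd (Tm X) + snd C)"
      using arg_cong[OF fixp, of "Tm^^N"] .
    also have "\<dots> = (fst ((Tm^^Suc N) X) + fst ((Tm^^N) C), snd ((Tm^^Suc N) X) + snd ((Tm^^N) C))"
      using itadd[OF TX C, of N] by (simp add: funpow_swap1)
    finally have e: "(Tm^^N) X = (fst ((Tm^^Suc N) X) + fst ((Tm^^N) C), snd ((Tm^^Suc N) X) + snd ((Tm^^N) C))" .
    show ?case
    proof (intro conjI allI impI)
      fix i j assume ij: "i < a" "j < b"
      have "fst ((Tm^^N) X) $$ (i,j) = fst ((Tm^^Suc N) X) $$ (i,j) + fst ((Tm^^N) C) $$ (i,j)"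
        using e CD[of N] ij by (metis carrier_matD(1,2) fst_conv index_add_mat(1))
      then show "fst X $$ (i,j) = fst ((Tm^^Suc N) X) $$ (i,j) + (\<Sum>k<Suc N. fst ((Tm^^k) C) $$ (i,j))"
        using Suc.IH ij by simp
    next
      fix i j assume ij: "i < c" "j < d"
      have "snd ((Tm^^N) X) $$ (i,j) = snd ((Tm^^Suc N) X) $$ (i,j) + snd ((Tm^^N) C) $$ (i,j)"
        using e CD[of N] ij by (metis carrier_matD(1,2) snd_conv index_add_mat(1))
      then show "snd X $$ (i,j) = snd ((Tm^^Suc N) X) $$ (i,j) + (\<Sum>k<Suc N. snd ((Tm^^k) C) $$ (i,j))"
        using Suc.IH ij by simp
    qed
  qed
  have lim0: "(\<lambda>N. q^N * pair_norm X) \<longlonglongrightarrow> 0"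
    using q0 q1 by (intro tendsto_mult_left_zero LIMSEQ_power_zero) simp
  have conv: "(\<lambda>N. \<Sum>k<N. f k) \<longlonglongrightarrow> s" if
     e: "\<And>N. s = g N + (\<Sum>k<N. f k)" and b: "\<And>N. \<bar>g N\<bar> \<le> q^N * pair_norm X" for f g and s :: real
  proof -
    have "g \<longlonglongrightarrow> 0"
      by (rule Lim_null_comparison[OF _ lim0]) (use b in auto)
    then have "(\<lambda>N. s - g N) \<longlonglongrightarrow> s - 0" by (intro tendsto_diff) auto
    moreover have "(\<lambda>N. s - g N) = (\<lambda>N. \<Sum>k<N. f k)" using e by (auto simp: algebra_simps)
    ultimately show ?thesis by simp
  qed
  show ?thesis
  proof
    show "mat_sums (\<lambda>k. fst ((Tm^^k) C)) (fst X)" unfolding mat_sums_def sums_def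
    proof (intro allI impI)
      fix i j assume ij: "i < dim_row (fst X)" "j < dim_col (fst X)"
      then have ij': "i < a" "j < b" using X unfolding Ddef by (auto simp: mem_Times_iff)
      show "(\<lambda>N. \<Sum>k<N. fst ((Tm^^k) C) $$ (i,j)) \<longlonglongrightarrow> fst X $$ (i,j)"
      proof (rule conv[where g = "\<lambda>N. fst ((Tm^^N) X) $$ (i,j)"])
        show "fst X $$ (i,j) = fst ((Tm^^N) X) $$ (i,j) + (\<Sum>k<N. fst ((Tm^^k) C) $$ (i,j))" for N
          using ident[of N] ij' by blast
        show "\<bar>fst ((Tm^^N) X) $$ (i,j)\<bar> \<le> q^N * pair_norm X" for N
          using entry_le_frob[of i "fst ((Tm^^N) X)" j] XD[of N] ij' frob_le_pair[of "(Tm^^N) X"] itnorm[of N]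
          by fastforce
      qed
    qed
  next
    show "mat_sums (\<lambda>k. snd ((Tm^^k) C)) (snd X)" unfolding mat_sums_def sums_def
    proof (intro allI impI)
      fix i j assume ij: "i < dim_row (snd X)" "j < dim_col (snd X)"
      then have ij': "i < c" "j < d" using X unfolding Ddef by (auto simp: mem_Times_iff)
      show "(\<lambda>N. \<Sum>k<N. snd ((Tm^^k) C) $$ (i,j)) \<longlonglongrightarrow> snd X $$ (i,j)"
      proof (rule conv[where g = "\<lambda>N. snd ((Tm^^N) X) $$ (i,j)"])
        show "snd X $$ (i,j) = snd ((Tm^^N) X) $$ (i,j) + (\<Sum>k<N. snd ((Tm^^k) C) $$ (i,j))" for N
          using ident[of N] ij' by blast
        show "\<bar>snd ((Tm^^N) X) $$ (i,j)\<bar> \<le> q^N * pair_norm X" for N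
          using entry_le_frob[of i "snd ((Tm^^N) X)" j] XD[of N] ij' frob_le_pair[of "(Tm^^N) X"] itnorm[of N]
          by fastforce
      qed
    qed
  qed
qed


definition fsq :: "real mat \<Rightarrow> real" where
  "fsq M = (\<Sum>i<dim_row M. \<Sum>j<dim_col M. (M $$ (i,j))\<^sup>2)"

lemma fsq_nonneg: "0 \<le> fsq M" unfolding fsq_def by (auto intro!: sum_nonneg)

lemma frob_sq: "(frob M)\<^sup>2 = fsq M"
  unfolding frob_def fsq_def by (simp add: sum_nonneg)

lemma pair_norm_sq: "pair_norm Z = sqrt (fsq (fst Z) + fsq (snd Z))"
  unfolding pair_norm_def by (simp add: frob_sq)

lemma fsq_add:
  assumes "dim_row M = dim_row N" "dim_col M = dim_col N"
  shows "fsq (M + N) \<le> 2 * fsq M + 2 * fsq N"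
proof -
  have "fsq (M + N) = (\<Sum>i<dim_row N. \<Sum>j<dim_col N. (M $$ (i,j) + N $$ (i,j))\<^sup>2)"
    unfolding fsq_def by simp
  also have "\<dots> \<le> (\<Sum>i<dim_row N. \<Sum>j<dim_col N. 2 * (M $$ (i,j))\<^sup>2 + 2 * (N $$ (i,j))\<^sup>2)"
  proof (intro sum_mono)
    fix i j
    show "(M $$ (i,j) + N $$ (i,j))\<^sup>2 \<le> 2 * (M $$ (i,j))\<^sup>2 + 2 * (N $$ (i,j))\<^sup>2"
      using sum_squares_ge_zero[of "M $$ (i,j) - N $$ (i,j)" 0] by (simp add: power2_eq_square algebra_simps)
  qed
  also have "\<dots> = 2 * fsq M + 2 * fsq N"
    unfolding fsq_def using assms by (simp add: sum.distrib sum_distrib_left)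
  finally show ?thesis .
qed

lemma fsq_had:
  assumes "dim_row R = dim_row H" "dim_col R = dim_col H"
  shows "fsq (H \<circ>\<^sub>h R) \<le> fsq H * fsq R"
proof -
  have hle: "(H $$ (i,j))\<^sup>2 \<le> fsq H" if "i < dim_row H" "j < dim_col H" for i j
  proof -
    have "(H $$ (i,j))\<^sup>2 \<le> (\<Sum>j<dim_col H. (H $$ (i,j))\<^sup>2)"
      using that by (intro member_le_sum) auto
    also have "\<dots> \<le> fsq H" unfolding fsq_def
      using that by (intro member_le_sum[of i "{..<dim_row H}" "\<lambda>i. \<Sum>j<dim_col H. (H $$ (i,j))\<^sup>2"]) (auto intro: sum_nonneg)
    finally show ?thesis .
  qed
  have "fsq (H \<circ>\<^sub>h R) = (\<Sum>i<dim_row H. \<Sum>j<dim_col H. (H $$ (i,j))\<^sup>2 * (R $$ (i,j))\<^sup>2)"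
    unfolding fsq_def hadamard_def by (simp add: power_mult_distrib)
  also have "\<dots> \<le> (\<Sum>i<dim_row H. \<Sum>j<dim_col H. fsq H * (R $$ (i,j))\<^sup>2)"
    by (intro sum_mono mult_right_mono hle) auto
  also have "\<dots> = fsq H * fsq R" unfolding fsq_def using assms by (simp add: sum_distrib_left)
  finally show ?thesis .
qed

lemma fsq_mult:
  assumes "dim_col A = dim_row B"
  shows "fsq (A * B) \<le> fsq A * fsq B"
proof -
  have "fsq (A * B) = (\<Sum>i<dim_row A. \<Sum>j<dim_col B. (\<Sum>k<dim_row B. A $$ (i,k) * B $$ (k,j))\<^sup>2)"
    unfolding fsq_def using assms by (auto simp: scalar_prod_def atLeast0LessThan intro!: sum.cong)
  also have "\<dots> \<le> (\<Sum>i<dim_row A. \<Sum>j<dim_col B. (\<Sum>k<dim_row B. (A $$ (i,k))\<^sup>2) * (\<Sum>k<dim_row B. (B $$ (k,j))\<^sup>2))"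
    by (intro sum_mono Cauchy_Schwarz_ineq_sum)
  also have "\<dots> = (\<Sum>i<dim_row A. \<Sum>k<dim_row B. (A $$ (i,k))\<^sup>2) * (\<Sum>j<dim_col B. \<Sum>k<dim_row B. (B $$ (k,j))\<^sup>2)"
    by (simp add: sum_product)
  also have "(\<Sum>j<dim_col B. \<Sum>k<dim_row B. (B $$ (k,j))\<^sup>2) = fsq B"
    unfolding fsq_def by (rule sum.swap)
  also have "(\<Sum>i<dim_row A. \<Sum>k<dim_row B. (A $$ (i,k))\<^sup>2) = fsq A"
    unfolding fsq_def using assms by simp
  finally show ?thesis by simp
qed

definition fprop :: "real mat \<Rightarrow> nat \<Rightarrow> nat \<Rightarrow> (real mat \<Rightarrow> real mat) \<Rightarrow> bool" where
  "fprop H a b f \<longleftrightarrow> (\<forall>Z\<in>carrier_mat a b. f Z \<in> carrier_mat (dim_row H) (dim_col H))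
     \<and> (\<forall>Y\<in>carrier_mat a b. \<forall>Z\<in>carrier_mat a b. f (Y + Z) = f Y + f Z)
     \<and> (\<forall>Z\<in>carrier_mat a b. \<forall>k. f (k \<cdot>\<^sub>m Z) = k \<cdot>\<^sub>m f Z)
     \<and> (\<exists>K. \<forall>Z\<in>carrier_mat a b. fsq Z \<le> 1 \<longrightarrow> fsq (f Z) \<le> K)"

lemma fprop_left:
  assumes "M \<in> carrier_mat (dim_row H) a" "dim_col H = b"
  shows "fprop H a b (\<lambda>Z. M * Z)"
  unfolding fprop_def
proof (intro conjI ballI allI impI)
  show "\<exists>K. \<forall>Z\<in>carrier_mat a b. fsq Z \<le> 1 \<longrightarrow> fsq (M * Z) \<le> K"
  proof (intro exI ballI impI)
    fix Z :: "real mat" assume Z: "Z \<in> carrier_mat a b" "fsq Z \<le> 1"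
    have "fsq (M * Z) \<le> fsq M * fsq Z" using assms Z by (intro fsq_mult) auto
    also have "\<dots> \<le> fsq M * 1" using Z fsq_nonneg[of M] by (intro mult_left_mono) auto
    finally show "fsq (M * Z) \<le> fsq M" by simp
  qed
qed (use assms in \<open>auto simp: mult_add_distrib_mat mult_smult_distrib\<close>)

lemma fprop_both:
  assumes "M \<in> carrier_mat (dim_row H) a" "N \<in> carrier_mat b (dim_col H)"
  shows "fprop H a b (\<lambda>Z. M * Z * N)"
  unfolding fprop_def
proof (intro conjI ballI allI impI)
  show "\<exists>K. \<forall>Z\<in>carrier_mat a b. fsq Z \<le> 1 \<longrightarrow> fsq (M * Z * N) \<le> K"
  proof (intro exI ballI impI)
    fix Z :: "real mat" assume Z: "Z \<in> carrier_mat a b" "fsq Z \<le> 1"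
    have "fsq (M * Z * N) \<le> fsq (M * Z) * fsq N" using assms Z by (intro fsq_mult) auto
    also have "\<dots> \<le> (fsq M * fsq Z) * fsq N" using assms Z fsq_nonneg[of N]
      by (intro mult_right_mono fsq_mult) auto
    also have "\<dots> \<le> (fsq M * 1) * fsq N" using Z fsq_nonneg[of M] fsq_nonneg[of N]
      by (intro mult_right_mono mult_left_mono) auto
    finally show "fsq (M * Z * N) \<le> fsq M * fsq N" by simp
  qed
next
  fix Y Z :: "real mat" assume "Y \<in> carrier_mat a b" "Z \<in> carrier_mat a b"
  then show "M * (Y + Z) * N = M * Y * N + M * Z * N"
    using assms by (simp add: mult_add_distrib_mat add_mult_distrib_mat[of _ "dim_row H" b])
next
  fix Z :: "real mat" and k :: real assume "Z \<in> carrier_mat a b"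
  then show "M * (k \<cdot>\<^sub>m Z) * N = k \<cdot>\<^sub>m (M * Z * N)"
    using assms by (simp add: mult_smult_distrib mult_smult_assoc_mat[of _ "dim_row H" b])
qed (use assms in auto)

lemma had_dims[simp]: "dim_row (H \<circ>\<^sub>h R) = dim_row H" "dim_col (H \<circ>\<^sub>h R) = dim_col H"
  unfolding hadamard_def by auto

lemma had_carrier[simp]: "H \<circ>\<^sub>h R \<in> carrier_mat (dim_row H) (dim_col H)"
  by (rule carrier_matI) auto

lemma had_add:
  assumes "R1 \<in> carrier_mat (dim_row H) (dim_col H)" "R2 \<in> carrier_mat (dim_row H) (dim_col H)"
  shows "H \<circ>\<^sub>h (R1 + R2) = H \<circ>\<^sub>h R1 + H \<circ>\<^sub>h R2"
  using assms by (intro eq_matI) (auto simp: hadamard_def algebra_simps)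

lemma had_smult:
  assumes "R \<in> carrier_mat (dim_row H) (dim_col H)"
  shows "H \<circ>\<^sub>h (k \<cdot>\<^sub>m R) = k \<cdot>\<^sub>m (H \<circ>\<^sub>h R)"
  using assms by (intro eq_matI) (auto simp: hadamard_def algebra_simps)

lemma shape_props:
  fixes H1 H2 :: "real mat" and f1 f2 f3 f4 :: "real mat \<Rightarrow> real mat"
  assumes Ddef: "D = carrier_mat a b \<times> carrier_mat c d"
    and H1: "H1 \<in> carrier_mat a b" and H2: "H2 \<in> carrier_mat c d"
    and p1: "fprop H1 a b f1" and p2: "fprop H1 c d f2" and p3: "fprop H2 a b f3" and p4: "fprop H2 c d f4"
    and Tdef: "Tm = (\<lambda>(Z1, Z2). (H1 \<circ>\<^sub>h f1 Z1 + H1 \<circ>\<^sub>h f2 Z2, H2 \<circ>\<^sub>h f3 Z1 + H2 \<circ>\<^sub>h f4 Z2))"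
  shows "\<And>Z. Z \<in> D \<Longrightarrow> Tm Z \<in> D"
    and "\<And>Y Z. Y \<in> D \<Longrightarrow> Z \<in> D \<Longrightarrow> Tm (fst Y + fst Z, snd Y + snd Z) = (fst (Tm Y) + fst (Tm Z), snd (Tm Y) + snd (Tm Z))"
    and "\<And>Z k. Z \<in> D \<Longrightarrow> Tm (k \<cdot>\<^sub>m fst Z, k \<cdot>\<^sub>m snd Z) = (k \<cdot>\<^sub>m fst (Tm Z), k \<cdot>\<^sub>m snd (Tm Z))"
    and "\<exists>K. \<forall>Z\<in>D. pair_norm Z \<le> 1 \<longrightarrow> pair_norm (Tm Z) \<le> K"
proof -
  note H1d[simp] = carrier_matD[OF H1] and H2d[simp] = carrier_matD[OF H2]
  from p1[unfolded fprop_def H1d] have f1c: "\<And>Z. Z \<in> carrier_mat a b \<Longrightarrow> f1 Z \<in> carrier_mat a b"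
    and f1a: "\<And>Y Z. Y \<in> carrier_mat a b \<Longrightarrow> Z \<in> carrier_mat a b \<Longrightarrow> f1 (Y + Z) = f1 Y + f1 Z"
    and f1s: "\<And>Z k. Z \<in> carrier_mat a b \<Longrightarrow> f1 (k \<cdot>\<^sub>m Z) = k \<cdot>\<^sub>m f1 Z"
    and f1b: "\<exists>K. \<forall>Z\<in>carrier_mat a b. fsq Z \<le> 1 \<longrightarrow> fsq (f1 Z) \<le> K"
    by blast+
  from p2[unfolded fprop_def H1d] have f2c: "\<And>Z. Z \<in> carrier_mat c d \<Longrightarrow> f2 Z \<in> carrier_mat a b"
    and f2a: "\<And>Y Z. Y \<in> carrier_mat c d \<Longrightarrow> Z \<in> carrier_mat c d \<Longrightarrow> f2 (Y + Z) = f2 Y + f2 Z"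
    and f2s: "\<And>Z k. Z \<in> carrier_mat c d \<Longrightarrow> f2 (k \<cdot>\<^sub>m Z) = k \<cdot>\<^sub>m f2 Z"
    and f2b: "\<exists>K. \<forall>Z\<in>carrier_mat c d. fsq Z \<le> 1 \<longrightarrow> fsq (f2 Z) \<le> K"
    by blast+
  from p3[unfolded fprop_def H2d] have f3c: "\<And>Z. Z \<in> carrier_mat a b \<Longrightarrow> f3 Z \<in> carrier_mat c d"
    and f3a: "\<And>Y Z. Y \<in> carrier_mat a b \<Longrightarrow> Z \<in> carrier_mat a b \<Longrightarrow> f3 (Y + Z) = f3 Y + f3 Z"
    and f3s: "\<And>Z k. Z \<in> carrier_mat a b \<Longrightarrow> f3 (k \<cdot>\<^sub>m Z) = k \<cdot>\<^sub>m f3 Z"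
    and f3b: "\<exists>K. \<forall>Z\<in>carrier_mat a b. fsq Z \<le> 1 \<longrightarrow> fsq (f3 Z) \<le> K"
    by blast+
  from p4[unfolded fprop_def H2d] have f4c: "\<And>Z. Z \<in> carrier_mat c d \<Longrightarrow> f4 Z \<in> carrier_mat c d"
    and f4a: "\<And>Y Z. Y \<in> carrier_mat c d \<Longrightarrow> Z \<in> carrier_mat c d \<Longrightarrow> f4 (Y + Z) = f4 Y + f4 Z"
    and f4s: "\<And>Z k. Z \<in> carrier_mat c d \<Longrightarrow> f4 (k \<cdot>\<^sub>m Z) = k \<cdot>\<^sub>m f4 Z"
    and f4b: "\<exists>K. \<forall>Z\<in>carrier_mat c d. fsq Z \<le> 1 \<longrightarrow> fsq (f4 Z) \<le> K"
    by blast+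
  show "Tm Z \<in> D" if "Z \<in> D" for Z
  proof -
    obtain Z1 Z2 where YZ: "Z = (Z1, Z2)" by (cases Z) auto
    have "H1 \<circ>\<^sub>h f1 Z1 + H1 \<circ>\<^sub>h f2 Z2 \<in> carrier_mat a b"
      using had_carrier[of H1] by (intro add_carrier_mat) simp_all
    moreover have "H2 \<circ>\<^sub>h f3 Z1 + H2 \<circ>\<^sub>h f4 Z2 \<in> carrier_mat c d"
      using had_carrier[of H2] by (intro add_carrier_mat) simp_all
    ultimately show ?thesis unfolding Tdef Ddef YZ by simp
  qed
  show "Tm (fst Y + fst Z, snd Y + snd Z) = (fst (Tm Y) + fst (Tm Z), snd (Tm Y) + snd (Tm Z))"
    if Y: "Y \<in> D" and Z: "Z \<in> D" for Y Z
  proof -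
    obtain Y1 Y2 Z1 Z2 where YZ: "Y = (Y1, Y2)" "Z = (Z1, Z2)" by (cases Y, cases Z) auto
    have c: "Y1 \<in> carrier_mat a b" "Y2 \<in> carrier_mat c d" "Z1 \<in> carrier_mat a b" "Z2 \<in> carrier_mat c d"
      using Y Z YZ Ddef by auto
    have e1: "H1 \<circ>\<^sub>h f1 (Y1 + Z1) + H1 \<circ>\<^sub>h f2 (Y2 + Z2) = (H1 \<circ>\<^sub>h f1 Y1 + H1 \<circ>\<^sub>h f2 Y2) + (H1 \<circ>\<^sub>h f1 Z1 + H1 \<circ>\<^sub>h f2 Z2)"
      using c f1c f2c by (simp add: f1a f2a had_add) (intro eq_matI, auto)
    have e2: "H2 \<circ>\<^sub>h f3 (Y1 + Z1) + H2 \<circ>\<^sub>h f4 (Y2 + Z2) = (H2 \<circ>\<^sub>h f3 Y1 + H2 \<circ>\<^sub>h f4 Y2) + (H2 \<circ>\<^sub>h f3 Z1 + H2 \<circ>\<^sub>h f4 Z2)"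
      using c f3c f4c by (simp add: f3a f4a had_add) (intro eq_matI, auto)
    show ?thesis unfolding Tdef YZ using e1 e2 by simp
  qed
  show "Tm (k \<cdot>\<^sub>m fst Z, k \<cdot>\<^sub>m snd Z) = (k \<cdot>\<^sub>m fst (Tm Z), k \<cdot>\<^sub>m snd (Tm Z))"
    if Z: "Z \<in> D" for Z k
  proof -
    obtain Z1 Z2 where YZ: "Z = (Z1, Z2)" by (cases Z) auto
    have c: "Z1 \<in> carrier_mat a b" "Z2 \<in> carrier_mat c d"
      using Z YZ Ddef by auto
    have e1: "H1 \<circ>\<^sub>h f1 (k \<cdot>\<^sub>m Z1) + H1 \<circ>\<^sub>h f2 (k \<cdot>\<^sub>m Z2) = k \<cdot>\<^sub>m (H1 \<circ>\<^sub>h f1 Z1 + H1 \<circ>\<^sub>h f2 Z2)"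
      using c f1c f2c by (simp add: f1s f2s had_smult) (intro eq_matI, auto simp: algebra_simps)
    have e2: "H2 \<circ>\<^sub>h f3 (k \<cdot>\<^sub>m Z1) + H2 \<circ>\<^sub>h f4 (k \<cdot>\<^sub>m Z2) = k \<cdot>\<^sub>m (H2 \<circ>\<^sub>h f3 Z1 + H2 \<circ>\<^sub>h f4 Z2)"
      using c f3c f4c by (simp add: f3s f4s had_smult) (intro eq_matI, auto simp: algebra_simps)
    show ?thesis unfolding Tdef YZ using e1 e2 by simp
  qed
  obtain K1 where K1: "\<forall>Z\<in>carrier_mat a b. fsq Z \<le> 1 \<longrightarrow> fsq (f1 Z) \<le> K1" using f1b by blast
  obtain K2 where K2: "\<forall>Z\<in>carrier_mat c d. fsq Z \<le> 1 \<longrightarrow> fsq (f2 Z) \<le> K2" using f2b by blast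
  obtain K3 where K3: "\<forall>Z\<in>carrier_mat a b. fsq Z \<le> 1 \<longrightarrow> fsq (f3 Z) \<le> K3" using f3b by blast
  obtain K4 where K4: "\<forall>Z\<in>carrier_mat c d. fsq Z \<le> 1 \<longrightarrow> fsq (f4 Z) \<le> K4" using f4b by blast
  show "\<exists>K. \<forall>Z\<in>D. pair_norm Z \<le> 1 \<longrightarrow> pair_norm (Tm Z) \<le> K"
  proof (intro exI ballI impI)
    fix Z assume Z: "Z \<in> D" and pn: "pair_norm Z \<le> 1"
    obtain Z1 Z2 where YZ: "Z = (Z1, Z2)" by (cases Z) auto
    have c: "Z1 \<in> carrier_mat a b" "Z2 \<in> carrier_mat c d"
      using Z YZ Ddef by auto
    have "fsq Z1 + fsq Z2 \<le> 1" using pn unfolding pair_norm_sq YZ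
      by (simp add: real_sqrt_le_1_iff)
    then have z: "fsq Z1 \<le> 1" "fsq Z2 \<le> 1" using fsq_nonneg[of Z1] fsq_nonneg[of Z2] by linarith+
    have b1: "fsq (H1 \<circ>\<^sub>h f1 Z1 + H1 \<circ>\<^sub>h f2 Z2) \<le> 2 * (fsq H1 * K1) + 2 * (fsq H1 * K2)"
    proof -
      have "fsq (H1 \<circ>\<^sub>h f1 Z1 + H1 \<circ>\<^sub>h f2 Z2) \<le> 2 * fsq (H1 \<circ>\<^sub>h f1 Z1) + 2 * fsq (H1 \<circ>\<^sub>h f2 Z2)"
        by (rule fsq_add) auto
      also have "fsq (H1 \<circ>\<^sub>h f1 Z1) \<le> fsq H1 * fsq (f1 Z1)" using f1c[OF c(1)] by (intro fsq_had) auto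
      also have "fsq (H1 \<circ>\<^sub>h f2 Z2) \<le> fsq H1 * fsq (f2 Z2)" using f2c[OF c(2)] by (intro fsq_had) auto
      also have "fsq (f1 Z1) \<le> K1" using K1 c z by auto
      also have "fsq (f2 Z2) \<le> K2" using K2 c z by auto
      finally show ?thesis using fsq_nonneg[of H1] by (simp add: mult_left_mono)
    qed
    have b2: "fsq (H2 \<circ>\<^sub>h f3 Z1 + H2 \<circ>\<^sub>h f4 Z2) \<le> 2 * (fsq H2 * K3) + 2 * (fsq H2 * K4)"
    proof -
      have "fsq (H2 \<circ>\<^sub>h f3 Z1 + H2 \<circ>\<^sub>h f4 Z2) \<le> 2 * fsq (H2 \<circ>\<^sub>h f3 Z1) + 2 * fsq (H2 \<circ>\<^sub>h f4 Z2)"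
        by (rule fsq_add) auto
      also have "fsq (H2 \<circ>\<^sub>h f3 Z1) \<le> fsq H2 * fsq (f3 Z1)" using f3c[OF c(1)] by (intro fsq_had) auto
      also have "fsq (H2 \<circ>\<^sub>h f4 Z2) \<le> fsq H2 * fsq (f4 Z2)" using f4c[OF c(2)] by (intro fsq_had) auto
      also have "fsq (f3 Z1) \<le> K3" using K3 c z by auto
      also have "fsq (f4 Z2) \<le> K4" using K4 c z by auto
      finally show ?thesis using fsq_nonneg[of H2] by (simp add: mult_left_mono)
    qed
    show "pair_norm (Tm Z) \<le> sqrt (2 * (fsq H1 * K1) + 2 * (fsq H1 * K2) + (2 * (fsq H2 * K3) + 2 * (fsq H2 * K4)))"
      unfolding pair_norm_sq Tdef YZ using b1 b2 by simp
  qed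
qed


lemma had_index: "i < dim_row H \<Longrightarrow> j < dim_col H \<Longrightarrow> (H \<circ>\<^sub>h R) $$ (i,j) = H $$ (i,j) * R $$ (i,j)"
  unfolding hadamard_def by simp

lemma gram_diag:
  fixes T :: "real mat"
  assumes T: "T \<in> carrier_mat s t" and off: "\<forall>i<s. \<forall>j<t. i \<noteq> j \<longrightarrow> T $$ (i,j) = 0"
  shows "T * transpose_mat T = mat s s (\<lambda>(i,j). if i = j then (if i < t then (T $$ (i,i))\<^sup>2 else 0) else 0)"
proof (rule eq_matI)
  fix i j assume ij: "i < dim_row (mat s s (\<lambda>(i,j). if i = j then (if i < t then (T $$ (i,i))\<^sup>2 else 0) else 0) :: real mat)"
    "j < dim_col (mat s s (\<lambda>(i,j). if i = j then (if i < t then (T $$ (i,i))\<^sup>2 else 0) else 0) :: real mat)"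
  then have ij': "i < s" "j < s" by auto
  have "(T * transpose_mat T) $$ (i,j) = (\<Sum>k<t. T $$ (i,k) * T $$ (j,k))"
    using T ij' by (subst mult_entry') auto
  also have "\<dots> = (\<Sum>k<t. if k = i then (if i = j then (T $$ (i,i))\<^sup>2 else 0) else 0)"
    using off ij' by (intro sum.cong refl) (auto simp: power2_eq_square)
  also have "\<dots> = (if i = j then (if i < t then (T $$ (i,i))\<^sup>2 else 0) else 0)"
    by (simp add: sum.delta)
  finally show "(T * transpose_mat T) $$ (i,j) = mat s s (\<lambda>(i,j). if i = j then (if i < t then (T $$ (i,i))\<^sup>2 else 0) else 0) $$ (i,j)"
    using ij' by simp
qed (use T in auto)

lemma diag_right:
  fixes X :: "real mat"
  assumes "X \<in> carrier_mat p s" "i < p" "j < s"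
  shows "(X * mat s s (\<lambda>(i,j). if i = j then e i else 0)) $$ (i,j) = X $$ (i,j) * e j"
proof -
  show ?thesis
    using assms by (subst mult_entry') (auto simp: mult_delta_left mult_delta_right sum.delta sum.delta' cong: if_cong)
qed

lemma diag_left:
  fixes X :: "real mat"
  assumes "X \<in> carrier_mat p s" "i < p" "j < s"
  shows "(mat p p (\<lambda>(i,j). if i = j then e i else 0) * X) $$ (i,j) = e i * X $$ (i,j)"
proof -
  show ?thesis
    using assms by (subst mult_entry') (auto simp: mult_delta_left mult_delta_right sum.delta sum.delta' cong: if_cong)
qed

lemma diag_entries:
  fixes X T Sg :: "real mat"
  assumes X: "X \<in> carrier_mat p s" and T: "T \<in> carrier_mat s t" and Sg: "Sg \<in> carrier_mat p q"
    and offT: "\<forall>i<s. \<forall>j<t. i \<noteq> j \<longrightarrow> T $$ (i,j) = 0"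
    and offS: "\<forall>i<p. \<forall>j<q. i \<noteq> j \<longrightarrow> Sg $$ (i,j) = 0"
    and ij: "i < p" "j < s"
  shows "(X * (T * transpose_mat T)) $$ (i,j) = X $$ (i,j) * (if j < t then (T $$ (j,j))\<^sup>2 else 0)"
    and "(Sg * (transpose_mat Sg * X)) $$ (i,j) = (if i < q then (Sg $$ (i,i))\<^sup>2 else 0) * X $$ (i,j)"
proof -
  show "(X * (T * transpose_mat T)) $$ (i,j) = X $$ (i,j) * (if j < t then (T $$ (j,j))\<^sup>2 else 0)"
    unfolding gram_diag[OF T offT] using diag_right[OF X ij, of "\<lambda>j. if j < t then (T $$ (j,j))\<^sup>2 else 0"]
    by (simp add: if_distrib cong: if_cong)
  have "Sg * (transpose_mat Sg * X) = (Sg * transpose_mat Sg) * X" using Sg X by simp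
  then show "(Sg * (transpose_mat Sg * X)) $$ (i,j) = (if i < q then (Sg $$ (i,i))\<^sup>2 else 0) * X $$ (i,j)"
    unfolding gram_diag[OF Sg offS] using diag_left[OF X ij, of "\<lambda>i. if i < q then (Sg $$ (i,i))\<^sup>2 else 0"]
    by (simp add: if_distrib cong: if_cong)
qed


lemma solve_lin:
  fixes x d e S h :: real
  assumes "x * d = e * x + S" "h * (d - e) = 1"
  shows "x = h * S"
proof -
  from assms(1) have "x * (d - e) = S" by (simp add: algebra_simps)
  then have "h * (x * (d - e)) = h * S" by simp
  moreover have "h * (x * (d - e)) = x * (h * (d - e))" by (simp add: algebra_simps)
  ultimately show ?thesis using assms(2) by simp
qed

lemma main_generic:
  fixes A dA At Pu Pu' Pv Pv' Qu Qv Sg T H1 H2 b11 b12 b21 :: "real mat"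
    and Tm :: "real mat \<times> real mat \<Rightarrow> real mat \<times> real mat"
  assumes cA: "A \<in> carrier_mat n m" and cdA: "dA \<in> carrier_mat n m"
   and cPu: "Pu \<in> carrier_mat n p" and cPu': "Pu' \<in> carrier_mat n p'"
   and cPv: "Pv \<in> carrier_mat m q" and cPv': "Pv' \<in> carrier_mat m q'"
   and cQu: "Qu \<in> carrier_mat n s" and cQv: "Qv \<in> carrier_mat m t"
   and cSg: "Sg \<in> carrier_mat p q" and cT: "T \<in> carrier_mat s t"
   and At: "At = A + dA"
   and h1: "A * Pv = Pu * Sg" and h2: "transpose_mat A * Pu = Pv * transpose_mat Sg"
   and h3: "At * Qv = Qu * T" and h4: "transpose_mat At * Qu = Qv * transpose_mat T"
   and h5: "Pu * transpose_mat Pu + Pu' * transpose_mat Pu' = 1\<^sub>m n"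
   and h6: "Pv * transpose_mat Pv + Pv' * transpose_mat Pv' = 1\<^sub>m m"
   and offS: "\<forall>i<p. \<forall>j<q. i \<noteq> j \<longrightarrow> Sg $$ (i,j) = 0"
   and offT: "\<forall>i<s. \<forall>j<t. i \<noteq> j \<longrightarrow> T $$ (i,j) = 0"
   and cH1: "H1 \<in> carrier_mat p s" and cH2: "H2 \<in> carrier_mat q t"
   and H1inv: "\<forall>i<p. \<forall>j<s. H1 $$ (i,j) * ((if j < t then (T $$ (j,j))\<^sup>2 else 0) - (if i < q then (Sg $$ (i,i))\<^sup>2 else 0)) = 1"
   and H2inv: "\<forall>i<q. \<forall>j<t. H2 $$ (i,j) * ((if j < s then (T $$ (j,j))\<^sup>2 else 0) - (if i < p then (Sg $$ (i,i))\<^sup>2 else 0)) = 1"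
   and b11: "b11 = transpose_mat Pu * dA * Pv" and b12: "b12 = transpose_mat Pu * dA * Pv'"
   and b21: "b21 = transpose_mat Pu' * dA * Pv"
   and Tdef: "Tm = (\<lambda>(Z1, Z2). (H1 \<circ>\<^sub>h (Sg * transpose_mat b11 * Z1) + H1 \<circ>\<^sub>h (b11 * Z2 * transpose_mat T),
                                 H2 \<circ>\<^sub>h (transpose_mat b11 * Z1 * T) + H2 \<circ>\<^sub>h (transpose_mat Sg * b11 * Z2)))"
   and Cdef: "C = (H1 \<circ>\<^sub>h (Sg * transpose_mat b21 * transpose_mat Pu' * Qu + b12 * transpose_mat Pv' * Qv * transpose_mat T),
                   H2 \<circ>\<^sub>h (transpose_mat b21 * transpose_mat Pu' * Qu * T + transpose_mat Sg * b12 * transpose_mat Pv' * Qv))"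
   and nrm: "op_norm (carrier_mat p s \<times> carrier_mat q t) Tm < 1"
  shows "mat_sums (\<lambda>k. fst ((Tm^^k) C)) (transpose_mat Pu * Qu) \<and> mat_sums (\<lambda>k. snd ((Tm^^k) C)) (transpose_mat Pv * Qv)"
proof -
  note dims[simp] = carrier_matD[OF cA] carrier_matD[OF cdA] carrier_matD[OF cPu] carrier_matD[OF cPu']
    carrier_matD[OF cPv] carrier_matD[OF cPv'] carrier_matD[OF cQu] carrier_matD[OF cQv]
    carrier_matD[OF cSg] carrier_matD[OF cT] carrier_matD[OF cH1] carrier_matD[OF cH2]
  define X where "X = transpose_mat Pu * Qu"
  define Y where "Y = transpose_mat Pv * Qv"
  have cX: "X \<in> carrier_mat p s" unfolding X_def by (rule carrier_matI) simp_all
  have cY: "Y \<in> carrier_mat q t" unfolding Y_def by (rule carrier_matI) simp_all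
  have E1: "transpose_mat Pu * (Qu * (T * transpose_mat T)) =
     Sg * (transpose_mat Sg * (transpose_mat Pu * Qu))
     + (Sg * (transpose_mat Pv * (transpose_mat dA * (Pu * (transpose_mat Pu * Qu))))
        + Sg * (transpose_mat Pv * (transpose_mat dA * (Pu' * (transpose_mat Pu' * Qu)))))
     + (transpose_mat Pu * (dA * (Pv * (transpose_mat Pv * (Qv * transpose_mat T))))
        + transpose_mat Pu * (dA * (Pv' * (transpose_mat Pv' * (Qv * transpose_mat T)))))"
    by (rule alg_E1[OF cA cdA cPu cPu' cPv cPv' cQu cQv cSg cT At h1 h2 h3 h4 h5 h6])
  have E2': "transpose_mat Pv * (Qv * (transpose_mat T * transpose_mat (transpose_mat T))) =
     transpose_mat Sg * (transpose_mat (transpose_mat Sg) * (transpose_mat Pv * Qv))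
     + (transpose_mat Sg * (transpose_mat Pu * (transpose_mat (transpose_mat dA) * (Pv * (transpose_mat Pv * Qv))))
        + transpose_mat Sg * (transpose_mat Pu * (transpose_mat (transpose_mat dA) * (Pv' * (transpose_mat Pv' * Qv)))))
     + (transpose_mat Pv * (transpose_mat dA * (Pu * (transpose_mat Pu * (Qu * transpose_mat (transpose_mat T)))))
        + transpose_mat Pv * (transpose_mat dA * (Pu' * (transpose_mat Pu' * (Qu * transpose_mat (transpose_mat T))))))"
  proof (rule alg_E1[of "transpose_mat A" m n "transpose_mat dA" Pv q Pv' q' Pu p Pu' p' Qv t Qu s
        "transpose_mat Sg" "transpose_mat T" "transpose_mat At"])
    show "transpose_mat At = transpose_mat A + transpose_mat dA" unfolding At
      by (rule transpose_add[of _ n m]) (use cA cdA in auto)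
  qed (use cA cdA cPu cPu' cPv cPv' cQu cQv cSg cT h1 h2 h3 h4 h5 h6 in auto)
  have E2: "transpose_mat Pv * (Qv * (transpose_mat T * T)) =
     transpose_mat Sg * (Sg * (transpose_mat Pv * Qv))
     + (transpose_mat Sg * (transpose_mat Pu * (dA * (Pv * (transpose_mat Pv * Qv))))
        + transpose_mat Sg * (transpose_mat Pu * (dA * (Pv' * (transpose_mat Pv' * Qv)))))
     + (transpose_mat Pv * (transpose_mat dA * (Pu * (transpose_mat Pu * (Qu * T))))
        + transpose_mat Pv * (transpose_mat dA * (Pu' * (transpose_mat Pu' * (Qu * T)))))"
    using E2' by simp
  have fp1: "X = fst (Tm (X, Y)) + fst C"
  proof (rule eq_matI)
    fix i j assume ij: "i < dim_row (fst (Tm (X, Y)) + fst C)" "j < dim_col (fst (Tm (X, Y)) + fst C)"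
    then have ij': "i < p" "j < s" unfolding Cdef by simp_all
    define A1 where "A1 = Sg * (transpose_mat Pv * (transpose_mat dA * (Pu * (transpose_mat Pu * Qu))))"
    define A3 where "A3 = Sg * (transpose_mat Pv * (transpose_mat dA * (Pu' * (transpose_mat Pu' * Qu))))"
    define A2 where "A2 = transpose_mat Pu * (dA * (Pv * (transpose_mat Pv * (Qv * transpose_mat T))))"
    define A4 where "A4 = transpose_mat Pu * (dA * (Pv' * (transpose_mat Pv' * (Qv * transpose_mat T))))"
    have n1: "Sg * transpose_mat b11 * X = A1" unfolding A1_def b11 X_def by (simp add: NF)
    have n2: "b11 * Y * transpose_mat T = A2" unfolding A2_def b11 Y_def by (simp add: NF)
    have n3: "Sg * transpose_mat b21 * transpose_mat Pu' * Qu + b12 * transpose_mat Pv' * Qv * transpose_mat T = A3 + A4"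
      unfolding A3_def A4_def b21 b12 by (simp add: NF)
    have cA': "A1 \<in> carrier_mat p s" "A2 \<in> carrier_mat p s" "A3 \<in> carrier_mat p s" "A4 \<in> carrier_mat p s"
      unfolding A1_def A2_def A3_def A4_def by (auto intro!: carrier_matI)
    have e: "X * (T * transpose_mat T) = Sg * (transpose_mat Sg * X) + (A1 + A3) + (A2 + A4)"
      using E1 unfolding A1_def A2_def A3_def A4_def X_def by (simp add: NF)
    define dT where "dT = (if j < t then (T $$ (j,j))\<^sup>2 else 0)"
    define eS where "eS = (if i < q then (Sg $$ (i,i))\<^sup>2 else 0)"
    have "X $$ (i,j) * dT = eS * X $$ (i,j) + (A1 $$ (i,j) + A3 $$ (i,j)) + (A2 $$ (i,j) + A4 $$ (i,j))"
    proof -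
      have "(X * (T * transpose_mat T)) $$ (i,j) = (Sg * (transpose_mat Sg * X) + (A1 + A3) + (A2 + A4)) $$ (i,j)"
        using e by simp
      then show ?thesis
        using diag_entries[OF cX cT cSg offT offS ij'] cA' ij' unfolding dT_def eS_def by simp
    qed
    moreover have "H1 $$ (i,j) * (dT - eS) = 1" using H1inv ij' unfolding dT_def eS_def by simp
    ultimately have "X $$ (i,j) = H1 $$ (i,j) * (A1 $$ (i,j) + A2 $$ (i,j) + A3 $$ (i,j) + A4 $$ (i,j))"
    proof -
      assume a1: "X $$ (i,j) * dT = eS * X $$ (i,j) + (A1 $$ (i,j) + A3 $$ (i,j)) + (A2 $$ (i,j) + A4 $$ (i,j))"
        and a2: "H1 $$ (i,j) * (dT - eS) = 1"
      have "X $$ (i,j) = H1 $$ (i,j) * ((A1 $$ (i,j) + A3 $$ (i,j)) + (A2 $$ (i,j) + A4 $$ (i,j)))"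
        using a1 a2 by (intro solve_lin[of _ dT eS]) (simp_all add: add.assoc)
      then show ?thesis by (simp add: algebra_simps)
    qed
    then show "X $$ (i,j) = (fst (Tm (X, Y)) + fst C) $$ (i,j)"
      unfolding Tdef Cdef using ij' cA' n1 n2 n3 by (simp add: had_index algebra_simps)
  qed (simp_all add: Tdef Cdef cX[THEN carrier_matD(1)] cX[THEN carrier_matD(2)])
  have fp2: "Y = snd (Tm (X, Y)) + snd C"
  proof (rule eq_matI)
    fix i j assume ij: "i < dim_row (snd (Tm (X, Y)) + snd C)" "j < dim_col (snd (Tm (X, Y)) + snd C)"
    then have ij': "i < q" "j < t" unfolding Cdef by simp_all
    define B1 where "B1 = transpose_mat Sg * (transpose_mat Pu * (dA * (Pv * (transpose_mat Pv * Qv))))"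
    define B3 where "B3 = transpose_mat Sg * (transpose_mat Pu * (dA * (Pv' * (transpose_mat Pv' * Qv))))"
    define B2 where "B2 = transpose_mat Pv * (transpose_mat dA * (Pu * (transpose_mat Pu * (Qu * T))))"
    define B4 where "B4 = transpose_mat Pv * (transpose_mat dA * (Pu' * (transpose_mat Pu' * (Qu * T))))"
    have n1: "transpose_mat Sg * b11 * Y = B1" unfolding B1_def b11 Y_def by (simp add: NF)
    have n2: "transpose_mat b11 * X * T = B2" unfolding B2_def b11 X_def by (simp add: NF)
    have n3: "transpose_mat b21 * transpose_mat Pu' * Qu * T + transpose_mat Sg * b12 * transpose_mat Pv' * Qv = B4 + B3"
      unfolding B3_def B4_def b21 b12 by (simp add: NF)
    have cB: "B1 \<in> carrier_mat q t" "B2 \<in> carrier_mat q t" "B3 \<in> carrier_mat q t" "B4 \<in> carrier_mat q t"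
      unfolding B1_def B2_def B3_def B4_def by (auto intro!: carrier_matI)
    have e: "Y * (transpose_mat T * transpose_mat (transpose_mat T)) = transpose_mat Sg * (transpose_mat (transpose_mat Sg) * Y) + (B1 + B3) + (B2 + B4)"
      using E2 unfolding B1_def B2_def B3_def B4_def Y_def by (simp add: NF)
    have offT': "\<forall>i<t. \<forall>j<s. i \<noteq> j \<longrightarrow> transpose_mat T $$ (i,j) = 0" using offT by simp
    have offS': "\<forall>i<q. \<forall>j<p. i \<noteq> j \<longrightarrow> transpose_mat Sg $$ (i,j) = 0" using offS by simp
    have cT': "transpose_mat T \<in> carrier_mat t s" using cT by simp
    have cS': "transpose_mat Sg \<in> carrier_mat q p" using cSg by simp
    define dT where "dT = (if j < s then (T $$ (j,j))\<^sup>2 else 0)"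
    define eS where "eS = (if i < p then (Sg $$ (i,i))\<^sup>2 else 0)"
    have "Y $$ (i,j) * dT = eS * Y $$ (i,j) + (B1 $$ (i,j) + B3 $$ (i,j)) + (B2 $$ (i,j) + B4 $$ (i,j))"
    proof -
      have "(Y * (transpose_mat T * transpose_mat (transpose_mat T))) $$ (i,j) = (transpose_mat Sg * (transpose_mat (transpose_mat Sg) * Y) + (B1 + B3) + (B2 + B4)) $$ (i,j)"
        using e by simp
      moreover have "(Y * (transpose_mat T * transpose_mat (transpose_mat T))) $$ (i,j) = Y $$ (i,j) * dT"
        using diag_entries(1)[OF cY cT' cS' offT' offS' ij'] ij' unfolding dT_def by (simp cong: if_cong)
      moreover have "(transpose_mat Sg * (transpose_mat (transpose_mat Sg) * Y)) $$ (i,j) = eS * Y $$ (i,j)"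
        using diag_entries(2)[OF cY cT' cS' offT' offS' ij'] ij' unfolding eS_def by (simp cong: if_cong)
      ultimately show ?thesis using cB ij' by simp
    qed
    moreover have "H2 $$ (i,j) * (dT - eS) = 1" using H2inv ij' unfolding dT_def eS_def by simp
    ultimately have "Y $$ (i,j) = H2 $$ (i,j) * ((B1 $$ (i,j) + B3 $$ (i,j)) + (B2 $$ (i,j) + B4 $$ (i,j)))"
      by (intro solve_lin[of _ dT eS]) (simp_all add: add.assoc)
    then show "Y $$ (i,j) = (snd (Tm (X, Y)) + snd C) $$ (i,j)"
      unfolding Tdef Cdef using ij' cB n1 n2 n3 by (simp add: had_index algebra_simps)
  qed (simp_all add: Tdef Cdef cY[THEN carrier_matD(1)] cY[THEN carrier_matD(2)])
  define D :: "(real mat \<times> real mat) set" where "D = carrier_mat p s \<times> carrier_mat q t"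
  have f1: "fprop H1 p s (\<lambda>Z. Sg * transpose_mat b11 * Z)"
    by (rule fprop_left) (auto simp: b11 intro!: carrier_matI)
  have f2: "fprop H1 q t (\<lambda>Z. b11 * Z * transpose_mat T)"
    by (rule fprop_both) (auto simp: b11 intro!: carrier_matI)
  have f3: "fprop H2 p s (\<lambda>Z. transpose_mat b11 * Z * T)"
    by (rule fprop_both) (auto simp: b11 intro!: carrier_matI)
  have f4: "fprop H2 q t (\<lambda>Z. transpose_mat Sg * b11 * Z)"
    by (rule fprop_left) (auto simp: b11 intro!: carrier_matI)
  note sp = shape_props[OF D_def cH1 cH2 f1 f2 f3 f4 Tdef]
  have XY: "(X, Y) \<in> D" unfolding D_def using cX cY by simp
  have CD: "C \<in> D" unfolding D_def Cdef using had_carrier[of H1] had_carrier[of H2] by simp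
  have "mat_sums (\<lambda>k. fst ((Tm^^k) C)) (fst (X, Y)) \<and> mat_sums (\<lambda>k. snd ((Tm^^k) C)) (snd (X, Y))"
    by (rule series[OF D_def sp(1) sp(2) sp(3) sp(4) _ XY CD])
       (use nrm fp1 fp2 in \<open>simp_all add: D_def\<close>)
  then show ?thesis unfolding X_def Y_def by simp
qed


lemma svd_facts:
  assumes svd: "is_full_svd n m A U S V" and r: "r \<le> n" "r \<le> m"
  shows "A * cols_first V r = cols_first U r * block_tl S r"
    and "A * cols_last V r = cols_last U r * block_br S r"
    and "transpose_mat A * cols_first U r = cols_first V r * transpose_mat (block_tl S r)"
    and "transpose_mat A * cols_last U r = cols_last V r * transpose_mat (block_br S r)"
    and "cols_first U r * transpose_mat (cols_first U r) + cols_last U r * transpose_mat (cols_last U r) = 1\<^sub>m n"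
    and "cols_first V r * transpose_mat (cols_first V r) + cols_last V r * transpose_mat (cols_last V r) = 1\<^sub>m m"
    and "\<forall>i<r. \<forall>j<r. i \<noteq> j \<longrightarrow> block_tl S r $$ (i,j) = 0"
    and "\<forall>i<n-r. \<forall>j<m-r. i \<noteq> j \<longrightarrow> block_br S r $$ (i,j) = 0"
proof -
  from svd have A: "A \<in> carrier_mat n m" and U: "U \<in> carrier_mat n n" and S: "S \<in> carrier_mat n m"
    and V: "V \<in> carrier_mat m m" and UU: "transpose_mat U * U = 1\<^sub>m n" and UU': "U * transpose_mat U = 1\<^sub>m n"
    and VV: "transpose_mat V * V = 1\<^sub>m m" and VV': "V * transpose_mat V = 1\<^sub>m m"
    and off: "\<forall>i<n. \<forall>j<m. i \<noteq> j \<longrightarrow> S $$ (i,j) = 0" and Ad: "A = U * S * transpose_mat V"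
    unfolding is_full_svd_def by auto
  note dims[simp] = carrier_matD[OF A] carrier_matD[OF U] carrier_matD[OF S] carrier_matD[OF V]
  show "A * cols_first V r = cols_first U r * block_tl S r"
    by (rule svd_block(1)[OF Ad U S V VV off r])
  show "A * cols_last V r = cols_last U r * block_br S r"
    by (rule svd_block(2)[OF Ad U S V VV off r])
  have At: "transpose_mat A = V * transpose_mat S * transpose_mat U" unfolding Ad by (simp add: NF)
  have offt: "\<forall>i<m. \<forall>j<n. i \<noteq> j \<longrightarrow> transpose_mat S $$ (i,j) = 0" using off by simp
  have St: "transpose_mat S \<in> carrier_mat m n" using S by simp
  show "transpose_mat A * cols_first U r = cols_first V r * transpose_mat (block_tl S r)"
    using svd_block(1)[OF At V St U UU offt r(2) r(1)] block_tl_transpose[of r S] r by simp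
  show "transpose_mat A * cols_last U r = cols_last V r * transpose_mat (block_br S r)"
    using svd_block(2)[OF At V St U UU offt r(2) r(1)] block_br_transpose[of S r] by simp
  show "cols_first U r * transpose_mat (cols_first U r) + cols_last U r * transpose_mat (cols_last U r) = 1\<^sub>m n"
    by (rule orth_split[OF U UU' r(1)])
  show "cols_first V r * transpose_mat (cols_first V r) + cols_last V r * transpose_mat (cols_last V r) = 1\<^sub>m m"
    by (rule orth_split[OF V VV' r(2)])
  show "\<forall>i<r. \<forall>j<r. i \<noteq> j \<longrightarrow> block_tl S r $$ (i,j) = 0"
    using off r by (auto simp: block_tl_def)
  show "\<forall>i<n-r. \<forall>j<m-r. i \<noteq> j \<longrightarrow> block_br S r $$ (i,j) = 0"
    using off r by (auto simp: block_br_def)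
qed

lemma sval_props:
  assumes svd: "is_full_svd n m A U S V"
  shows "0 \<le> sval S k" and "i \<le> j \<Longrightarrow> sval S j \<le> sval S i"
    and "k < min n m \<Longrightarrow> sval S k = S $$ (k,k)" and "min n m \<le> k \<Longrightarrow> sval S k = 0"
proof -
  from svd have S: "S \<in> carrier_mat n m" and nn: "\<forall>i<min n m. 0 \<le> S $$ (i,i)"
    and mono: "\<forall>i j. i \<le> j \<longrightarrow> j < min n m \<longrightarrow> S $$ (j,j) \<le> S $$ (i,i)"
    unfolding is_full_svd_def by auto
  have d: "dim_row S = n" "dim_col S = m" using S by auto
  show "0 \<le> sval S k" unfolding sval_def d using nn by auto
  show "k < min n m \<Longrightarrow> sval S k = S $$ (k,k)" unfolding sval_def d by simp
  show "min n m \<le> k \<Longrightarrow> sval S k = 0" unfolding sval_def d by auto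
  assume ij: "i \<le> j"
  show "sval S j \<le> sval S i" unfolding sval_def d using mono nn ij by auto
qed

theorem theorem2p7:
  fixes n m r :: nat and A dA U S V Ut St Vt :: "real mat"
  assumes dims: "A \<in> carrier_mat n m" "dA \<in> carrier_mat n m"
    and r_pos: "1 \<le> r"
    and rank: "vec_space.rank n A \<ge> r"
    and svdA: "is_full_svd n m A U S V"
    and svdAt: "is_full_svd n m (A + dA) Ut St Vt"
    and gap1: "sval S (r-1) - sval St r > 0"
    and gap2: "sval St (r-1) - sval S r > 0"
  defines "U1 \<equiv> cols_first U r" and "U2 \<equiv> cols_last U r"
    and "V1 \<equiv> cols_first V r" and "V2 \<equiv> cols_last V r"
    and "Ut1 \<equiv> cols_first Ut r" and "Ut2 \<equiv> cols_last Ut r"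
    and "Vt1 \<equiv> cols_first Vt r" and "Vt2 \<equiv> cols_last Vt r"
    and "S1 \<equiv> block_tl S r" and "S2 \<equiv> block_br S r"
    and "St1 \<equiv> block_tl St r" and "St2 \<equiv> block_br St r"
  defines "FU12 \<equiv> F12 n r S St" and "FU21 \<equiv> F21 n r S St"
    and "FV12 \<equiv> F12 m r S St" and "FV21 \<equiv> F21 m r S St"
  defines "a11 \<equiv> transpose_mat U1 * dA * V1" and "a12 \<equiv> transpose_mat U1 * dA * V2"
    and "a21 \<equiv> transpose_mat U2 * dA * V1" and "a22 \<equiv> transpose_mat U2 * dA * V2"
  defines "\<F> \<equiv> (\<lambda>(X1, X2).
           (FU21 \<circ>\<^sub>h (S2 * transpose_mat a22 * X1) + FU21 \<circ>\<^sub>h (a22 * X2 * transpose_mat St1),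
            FV21 \<circ>\<^sub>h (transpose_mat a22 * X1 * St1) + FV21 \<circ>\<^sub>h (transpose_mat S2 * a22 * X2)))"
    and "\<G> \<equiv> (\<lambda>(X3, X4).
           (FU12 \<circ>\<^sub>h (a11 * X4 * transpose_mat St2) + FU12 \<circ>\<^sub>h (S1 * transpose_mat a11 * X3),
            FV12 \<circ>\<^sub>h (transpose_mat S1 * a11 * X4) + FV12 \<circ>\<^sub>h (transpose_mat a11 * X3 * St2)))"
  defines "C1 \<equiv> FU21 \<circ>\<^sub>h (S2 * transpose_mat a12 * transpose_mat U1 * Ut1
                        + a21 * transpose_mat V1 * Vt1 * transpose_mat St1)"
    and "C2 \<equiv> FV21 \<circ>\<^sub>h (transpose_mat a12 * transpose_mat U1 * Ut1 * St1
                        + transpose_mat S2 * a21 * transpose_mat V1 * Vt1)"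
    and "C3 \<equiv> FU12 \<circ>\<^sub>h (a12 * transpose_mat V2 * Vt2 * transpose_mat St2
                        + S1 * transpose_mat a21 * transpose_mat U2 * Ut2)"
    and "C4 \<equiv> FV12 \<circ>\<^sub>h (transpose_mat S1 * a12 * transpose_mat V2 * Vt2
                        + transpose_mat a21 * transpose_mat U2 * Ut2 * St2)"
    and "DF \<equiv> carrier_mat (n - r) r \<times> carrier_mat (m - r) r"
    and "DG \<equiv> carrier_mat r (n - r) \<times> carrier_mat r (m - r)"
  assumes normF: "op_norm DF \<F> < 1"
    and normG: "op_norm DG \<G> < 1"
  shows "mat_sums (\<lambda>k. fst ((\<F> ^^ k) (C1, C2))) (transpose_mat U2 * Ut1)
       \<and> mat_sums (\<lambda>k. snd ((\<F> ^^ k) (C1, C2))) (transpose_mat V2 * Vt1)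
       \<and> mat_sums (\<lambda>k. fst ((\<G> ^^ k) (C3, C4))) (transpose_mat U1 * Ut2)
       \<and> mat_sums (\<lambda>k. snd ((\<G> ^^ k) (C3, C4))) (transpose_mat V1 * Vt2)"
proof -
  from svdA have cU: "U \<in> carrier_mat n n" and cS: "S \<in> carrier_mat n m" and cV: "V \<in> carrier_mat m m"
    unfolding is_full_svd_def by auto
  from svdAt have cUt: "Ut \<in> carrier_mat n n" and cSt: "St \<in> carrier_mat n m" and cVt: "Vt \<in> carrier_mat m m"
    unfolding is_full_svd_def by auto
  note dimsb[simp] = carrier_matD[OF cU] carrier_matD[OF cS] carrier_matD[OF cV]
    carrier_matD[OF cUt] carrier_matD[OF cSt] carrier_matD[OF cVt] carrier_matD[OF dims(1)] carrier_matD[OF dims(2)]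
  have rmin: "r \<le> min n m"
  proof (rule ccontr)
    assume "\<not> r \<le> min n m"
    then have "min n m \<le> r - 1" "min n m \<le> r" by auto
    then have "sval S (r-1) = 0" "sval St r = 0"
      using sval_props(4)[OF svdA] sval_props(4)[OF svdAt] by auto
    then show False using gap1 by simp
  qed
  then have rn: "r \<le> n" and rm: "r \<le> m" by auto
  note fA = svd_facts[OF svdA rn rm]
  note fAt = svd_facts[OF svdAt rn rm]
  note spS = sval_props[OF svdA]
  note spSt = sval_props[OF svdAt]
  have sq_pos: "x\<^sup>2 - y\<^sup>2 > 0" if "0 \<le> y" "y < x" for x y :: real
  proof -
    have "x\<^sup>2 - y\<^sup>2 = (x - y) * (x + y)" by (simp add: power2_eq_square algebra_simps)
    moreover have "(x - y) * (x + y) > 0" using that by (intro mult_pos_pos) auto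
    ultimately show ?thesis by simp
  qed
  have gapF: "(sval St j)\<^sup>2 - (sval S k)\<^sup>2 > 0" if "j < r" "r \<le> k" for j k
  proof -
    have "sval S k \<le> sval S r" using spS(2) that by simp
    moreover have "sval St (r-1) \<le> sval St j" using spSt(2) that by simp
    ultimately show ?thesis using gap2 spS(1)[of k] by (intro sq_pos) auto
  qed
  have gapG: "(sval St k)\<^sup>2 - (sval S i)\<^sup>2 < 0" if "i < r" "r \<le> k" for i k
  proof -
    have "sval St k \<le> sval St r" using spSt(2) that by simp
    moreover have "sval S (r-1) \<le> sval S i" using spS(2) that by simp
    ultimately have "(sval S i)\<^sup>2 - (sval St k)\<^sup>2 > 0" using gap1 spSt(1)[of k] by (intro sq_pos) auto
    then show ?thesis by simp
  qed
  have inv1: "1 / d * d = 1" if "d \<noteq> 0" for d :: real using that by simp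
  have brS: "(if i < m - r then (S2 $$ (i,i))\<^sup>2 else 0) = (sval S (r+i))\<^sup>2" if "i < n - r" for i
  proof (cases "i < m - r")
    case True
    then have "r + i < min n m" using that by auto
    then show ?thesis using True that spS(3)[of "r+i"] unfolding S2_def block_br_def by (simp add: add.commute)
  next
    case False
    then have "min n m \<le> r + i" using that by auto
    then show ?thesis using False spS(4)[of "r+i"] by simp
  qed
  have brS': "(if i < n - r then (S2 $$ (i,i))\<^sup>2 else 0) = (sval S (r+i))\<^sup>2" if "i < m - r" for i
  proof (cases "i < n - r")
    case True
    then have "r + i < min n m" using that by auto
    then show ?thesis using True that spS(3)[of "r+i"] unfolding S2_def block_br_def by (simp add: add.commute)
  next
    case False
    then have "min n m \<le> r + i" using that by auto
    then show ?thesis using False spS(4)[of "r+i"] by simp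
  qed
  have brSt: "(if j < m - r then (St2 $$ (j,j))\<^sup>2 else 0) = (sval St (r+j))\<^sup>2" if "j < n - r" for j
  proof (cases "j < m - r")
    case True
    then have "r + j < min n m" using that by auto
    then show ?thesis using True that spSt(3)[of "r+j"] unfolding St2_def block_br_def by (simp add: add.commute)
  next
    case False
    then have "min n m \<le> r + j" using that by auto
    then show ?thesis using False spSt(4)[of "r+j"] by simp
  qed
  have brSt': "(if j < n - r then (St2 $$ (j,j))\<^sup>2 else 0) = (sval St (r+j))\<^sup>2" if "j < m - r" for j
  proof (cases "j < n - r")
    case True
    then have "r + j < min n m" using that by auto
    then show ?thesis using True that spSt(3)[of "r+j"] unfolding St2_def block_br_def by (simp add: add.commute)
  next
    case False
    then have "min n m \<le> r + j" using that by auto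
    then show ?thesis using False spSt(4)[of "r+j"] by simp
  qed
  have tlS: "S1 $$ (i,i) = sval S i" if "i < r" for i
    using that spS(3)[of i] rmin unfolding S1_def block_tl_def by auto
  have tlSt: "St1 $$ (i,i) = sval St i" if "i < r" for i
    using that spSt(3)[of i] rmin unfolding St1_def block_tl_def by auto
  have cU1: "U1 \<in> carrier_mat n r" and cU2: "U2 \<in> carrier_mat n (n-r)"
    and cV1: "V1 \<in> carrier_mat m r" and cV2: "V2 \<in> carrier_mat m (m-r)"
    and cUt1: "Ut1 \<in> carrier_mat n r" and cUt2: "Ut2 \<in> carrier_mat n (n-r)"
    and cVt1: "Vt1 \<in> carrier_mat m r" and cVt2: "Vt2 \<in> carrier_mat m (m-r)"
    and cS1: "S1 \<in> carrier_mat r r" and cS2: "S2 \<in> carrier_mat (n-r) (m-r)"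
    and cSt1: "St1 \<in> carrier_mat r r" and cSt2: "St2 \<in> carrier_mat (n-r) (m-r)"
    unfolding U1_def U2_def V1_def V2_def Ut1_def Ut2_def Vt1_def Vt2_def S1_def S2_def St1_def St2_def
    by (auto intro!: carrier_matI)
  have cFU21: "FU21 \<in> carrier_mat (n-r) r" and cFV21: "FV21 \<in> carrier_mat (m-r) r"
    and cFU12: "FU12 \<in> carrier_mat r (n-r)" and cFV12: "FV12 \<in> carrier_mat r (m-r)"
    unfolding FU21_def FV21_def FU12_def FV12_def F21_def F12_def by auto
  have cAt: "A + dA \<in> carrier_mat n m" using dims by simp
  have partF: "mat_sums (\<lambda>k. fst ((\<F> ^^ k) (C1, C2))) (transpose_mat U2 * Ut1)
       \<and> mat_sums (\<lambda>k. snd ((\<F> ^^ k) (C1, C2))) (transpose_mat V2 * Vt1)"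
  proof (rule main_generic[OF dims(1) dims(2) cU2 cU1 cV2 cV1 cUt1 cVt1 cS2 cSt1 refl])
    show "A * V2 = U2 * S2" using fA(2) unfolding V2_def U2_def S2_def .
    show "transpose_mat A * U2 = V2 * transpose_mat S2" using fA(4) unfolding V2_def U2_def S2_def .
    show "(A + dA) * Vt1 = Ut1 * St1" using fAt(1) unfolding Vt1_def Ut1_def St1_def .
    show "transpose_mat (A + dA) * Ut1 = Vt1 * transpose_mat St1" using fAt(3) unfolding Vt1_def Ut1_def St1_def .
    show "U2 * transpose_mat U2 + U1 * transpose_mat U1 = 1\<^sub>m n"
      using fA(5) cU1 cU2 unfolding U1_def[symmetric] U2_def[symmetric]
      by (metis comm_add_mat mult_carrier_mat transpose_carrier_mat)
    show "V2 * transpose_mat V2 + V1 * transpose_mat V1 = 1\<^sub>m m"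
      using fA(6) cV1 cV2 unfolding V1_def[symmetric] V2_def[symmetric]
      by (metis comm_add_mat mult_carrier_mat transpose_carrier_mat)
    show "\<forall>i<n - r. \<forall>j<m - r. i \<noteq> j \<longrightarrow> S2 $$ (i, j) = 0" using fA(8) unfolding S2_def .
    show "\<forall>i<r. \<forall>j<r. i \<noteq> j \<longrightarrow> St1 $$ (i, j) = 0" using fAt(7) unfolding St1_def .
    show "FU21 \<in> carrier_mat (n - r) r" by (rule cFU21)
    show "FV21 \<in> carrier_mat (m - r) r" by (rule cFV21)
    show "\<forall>i<n - r. \<forall>j<r. FU21 $$ (i, j) * ((if j < r then (St1 $$ (j, j))\<^sup>2 else 0) - (if i < m - r then (S2 $$ (i, i))\<^sup>2 else 0)) = 1"
    proof (intro allI impI)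
      fix i j assume ij: "i < n - r" "j < r"
      have "FU21 $$ (i,j) = 1 / ((sval St j)\<^sup>2 - (sval S (r+i))\<^sup>2)"
        unfolding FU21_def F21_def using ij by simp
      then show "FU21 $$ (i, j) * ((if j < r then (St1 $$ (j, j))\<^sup>2 else 0) - (if i < m - r then (S2 $$ (i, i))\<^sup>2 else 0)) = 1"
        using ij brS[of i] tlSt[of j] gapF[of j "r+i"] inv1 by simp
    qed
    show "\<forall>i<m - r. \<forall>j<r. FV21 $$ (i, j) * ((if j < r then (St1 $$ (j, j))\<^sup>2 else 0) - (if i < n - r then (S2 $$ (i, i))\<^sup>2 else 0)) = 1"
    proof (intro allI impI)
      fix i j assume ij: "i < m - r" "j < r"
      have "FV21 $$ (i,j) = 1 / ((sval St j)\<^sup>2 - (sval S (r+i))\<^sup>2)"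
        unfolding FV21_def F21_def using ij by simp
      then show "FV21 $$ (i, j) * ((if j < r then (St1 $$ (j, j))\<^sup>2 else 0) - (if i < n - r then (S2 $$ (i, i))\<^sup>2 else 0)) = 1"
        using ij brS'[of i] tlSt[of j] gapF[of j "r+i"] inv1 by simp
    qed
    show "a22 = transpose_mat U2 * dA * V2" by (simp add: a22_def)
    show "a21 = transpose_mat U2 * dA * V1" by (simp add: a21_def)
    show "a12 = transpose_mat U1 * dA * V2" by (simp add: a12_def)
    show "\<F> = (\<lambda>(Z1, Z2). (FU21 \<circ>\<^sub>h (S2 * transpose_mat a22 * Z1) + FU21 \<circ>\<^sub>h (a22 * Z2 * transpose_mat St1),
                                 FV21 \<circ>\<^sub>h (transpose_mat a22 * Z1 * St1) + FV21 \<circ>\<^sub>h (transpose_mat S2 * a22 * Z2)))"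
      by (simp add: \<F>_def)
    show "(C1, C2) = (FU21 \<circ>\<^sub>h (S2 * transpose_mat a12 * transpose_mat U1 * Ut1 + a21 * transpose_mat V1 * Vt1 * transpose_mat St1),
                   FV21 \<circ>\<^sub>h (transpose_mat a12 * transpose_mat U1 * Ut1 * St1 + transpose_mat S2 * a21 * transpose_mat V1 * Vt1))"
      by (simp add: C1_def C2_def)
    show "op_norm (carrier_mat (n - r) r \<times> carrier_mat (m - r) r) \<F> < 1" using normF unfolding DF_def .
  qed
  have ca11: "a11 \<in> carrier_mat r r" and ca12: "a12 \<in> carrier_mat r (m-r)" and ca21: "a21 \<in> carrier_mat (n-r) r"
    unfolding a11_def a12_def a21_def using cU1 cU2 cV1 cV2 dims(2) by (auto intro!: carrier_matI)
  have Geq: "\<G> = (\<lambda>(Z1, Z2). (FU12 \<circ>\<^sub>h (S1 * transpose_mat a11 * Z1) + FU12 \<circ>\<^sub>h (a11 * Z2 * transpose_mat St2),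
                                 FV12 \<circ>\<^sub>h (transpose_mat a11 * Z1 * St2) + FV12 \<circ>\<^sub>h (transpose_mat S1 * a11 * Z2)))"
  proof -
    have e1: "FU12 \<circ>\<^sub>h (a11 * Z2 * transpose_mat St2) + FU12 \<circ>\<^sub>h (S1 * transpose_mat a11 * Z1)
        = FU12 \<circ>\<^sub>h (S1 * transpose_mat a11 * Z1) + FU12 \<circ>\<^sub>h (a11 * Z2 * transpose_mat St2)" for Z1 Z2
      by (rule comm_add_mat) (rule had_carrier)+
    have e2: "FV12 \<circ>\<^sub>h (transpose_mat S1 * a11 * Z2) + FV12 \<circ>\<^sub>h (transpose_mat a11 * Z1 * St2)
        = FV12 \<circ>\<^sub>h (transpose_mat a11 * Z1 * St2) + FV12 \<circ>\<^sub>h (transpose_mat S1 * a11 * Z2)" for Z1 Z2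
      by (rule comm_add_mat) (rule had_carrier)+
    show ?thesis unfolding \<G>_def using e1 e2 by simp
  qed
  have Ceq: "(C3, C4) = (FU12 \<circ>\<^sub>h (S1 * transpose_mat a21 * transpose_mat U2 * Ut2 + a12 * transpose_mat V2 * Vt2 * transpose_mat St2),
                   FV12 \<circ>\<^sub>h (transpose_mat a21 * transpose_mat U2 * Ut2 * St2 + transpose_mat S1 * a12 * transpose_mat V2 * Vt2))"
  proof -
    have e1: "a12 * transpose_mat V2 * Vt2 * transpose_mat St2 + S1 * transpose_mat a21 * transpose_mat U2 * Ut2
       = S1 * transpose_mat a21 * transpose_mat U2 * Ut2 + a12 * transpose_mat V2 * Vt2 * transpose_mat St2"
      by (rule comm_add_mat[of _ r "n-r"])
        (use ca12 ca21 cS1 cU2 cUt2 cV2 cVt2 cSt2 in \<open>auto intro!: carrier_matI\<close>)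
    have e2: "transpose_mat S1 * a12 * transpose_mat V2 * Vt2 + transpose_mat a21 * transpose_mat U2 * Ut2 * St2
       = transpose_mat a21 * transpose_mat U2 * Ut2 * St2 + transpose_mat S1 * a12 * transpose_mat V2 * Vt2"
      by (rule comm_add_mat[of _ r "m-r"])
        (use ca12 ca21 cS1 cU2 cUt2 cV2 cVt2 cSt2 in \<open>auto intro!: carrier_matI\<close>)
    show ?thesis unfolding C3_def C4_def using e1 e2 by simp
  qed
  have partG: "mat_sums (\<lambda>k. fst ((\<G> ^^ k) (C3, C4))) (transpose_mat U1 * Ut2)
       \<and> mat_sums (\<lambda>k. snd ((\<G> ^^ k) (C3, C4))) (transpose_mat V1 * Vt2)"
  proof (rule main_generic[OF dims(1) dims(2) cU1 cU2 cV1 cV2 cUt2 cVt2 cS1 cSt2 refl _ _ _ _ _ _ _ _ cFU12 cFV12 _ _ _ _ _ Geq Ceq])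
    show "A * V1 = U1 * S1" using fA(1) unfolding V1_def U1_def S1_def .
    show "transpose_mat A * U1 = V1 * transpose_mat S1" using fA(3) unfolding V1_def U1_def S1_def .
    show "(A + dA) * Vt2 = Ut2 * St2" using fAt(2) unfolding Vt2_def Ut2_def St2_def .
    show "transpose_mat (A + dA) * Ut2 = Vt2 * transpose_mat St2" using fAt(4) unfolding Vt2_def Ut2_def St2_def .
    show "U1 * transpose_mat U1 + U2 * transpose_mat U2 = 1\<^sub>m n"
      using fA(5) unfolding U1_def U2_def .
    show "V1 * transpose_mat V1 + V2 * transpose_mat V2 = 1\<^sub>m m"
      using fA(6) unfolding V1_def V2_def .
    show "\<forall>i<r. \<forall>j<r. i \<noteq> j \<longrightarrow> S1 $$ (i, j) = 0" using fA(7) unfolding S1_def .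
    show "\<forall>i<n - r. \<forall>j<m - r. i \<noteq> j \<longrightarrow> St2 $$ (i, j) = 0" using fAt(8) unfolding St2_def .
    show "\<forall>i<r. \<forall>j<n - r. FU12 $$ (i, j) * ((if j < m - r then (St2 $$ (j, j))\<^sup>2 else 0) - (if i < r then (S1 $$ (i, i))\<^sup>2 else 0)) = 1"
    proof (intro allI impI)
      fix i j assume ij: "i < r" "j < n - r"
      have "FU12 $$ (i,j) = 1 / ((sval St (r+j))\<^sup>2 - (sval S i)\<^sup>2)"
        unfolding FU12_def F12_def using ij by simp
      then show "FU12 $$ (i, j) * ((if j < m - r then (St2 $$ (j, j))\<^sup>2 else 0) - (if i < r then (S1 $$ (i, i))\<^sup>2 else 0)) = 1"
        using ij brSt[of j] tlS[of i] gapG[of i "r+j"] inv1 by simp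
    qed
    show "\<forall>i<r. \<forall>j<m - r. FV12 $$ (i, j) * ((if j < n - r then (St2 $$ (j, j))\<^sup>2 else 0) - (if i < r then (S1 $$ (i, i))\<^sup>2 else 0)) = 1"
    proof (intro allI impI)
      fix i j assume ij: "i < r" "j < m - r"
      have "FV12 $$ (i,j) = 1 / ((sval St (r+j))\<^sup>2 - (sval S i)\<^sup>2)"
        unfolding FV12_def F12_def using ij by simp
      then show "FV12 $$ (i, j) * ((if j < n - r then (St2 $$ (j, j))\<^sup>2 else 0) - (if i < r then (S1 $$ (i, i))\<^sup>2 else 0)) = 1"
        using ij brSt'[of j] tlS[of i] gapG[of i "r+j"] inv1 by simp
    qed
    show "a11 = transpose_mat U1 * dA * V1" by (simp add: a11_def)
    show "a12 = transpose_mat U1 * dA * V2" by (simp add: a12_def)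
    show "a21 = transpose_mat U2 * dA * V1" by (simp add: a21_def)
    show "op_norm (carrier_mat r (n - r) \<times> carrier_mat r (m - r)) \<G> < 1" using normG unfolding DG_def .
  qed
  show ?thesis using partF partG by blast
qed

end
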